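(* Let $n\ge1$, $q$ a prime power, and $\mathcal{F}$ a covering of $[n]$ with no redundant basic set and with exactly two connected components. Then the $\mathcal{F}$-combinatorial metric satisfies the MacWilliams Extension Property if and only if $\mathcal{F}$ is a $k$-partition of $[n]$ for some $k$.
   Context: For a covering $\mathcal{F}$ of $[n]$ (subsets called basic sets, union $[n]$) and $x\in\mathbb{F}_q^n$, $\mathrm{wt}_{\mathcal{F}}(x)=\min\{|\mathcal{A}|:\mathcal{A}\subset\mathcal{F},\ \mathrm{supp}(x)\subset\bigcup_{A\in\mathcal{A}}A\}$ with $\mathrm{supp}(x)=\{i:x_i\ne0\}$, and $d_{\mathcal{F}}(x,y)=\mathrm{wt}_{\mathcal{F}}(x-y)$. A basic set is redundant if properly contained in another. $\mathcal{F}$ is a $k$-partition if it is a partition of $[n]$ with all blocks of cardinality $k$. A subfamily $\mathcal{S}\subset\mathcal{F}$ is connected if it cannot be written as $\mathcal{A}\cup\mathcal{B}$ with $\mathcal{A},\mathcal{B}$ nonempty and $A\cap B=\emptyset$ for all $A\in\mathcal{A},B\in\mathcal{B}$; connected components are maximal connected subfamilies. A local $\mathcal{F}$-equivalence between linear codes $\mathcal{C}_1,\mathcal{C}_2\subset\mathbb{F}_q^n$ is a linear map $t:\mathcal{C}_1\to\mathcal{C}_2$ preserving $\mathrm{wt}_{\mathcal{F}}$. The metric satisfies the MacWilliams Extension Property if for all linear codes $\mathcal{C}_1,\mathcal{C}_2$ every local $\mathcal{F}$-equivalence $t$ extends to a linear isometry $T$ of $(\mathbb{F}_q^n,d_{\mathcal{F}})$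 with $T|_{\mathcal{C}_1}=t$. *)

theory Defs
  imports Main "HOL-Library.Function_Algebras"
begin

text \<open>A vector of F_q^n is a function
  nat => 'f vanishing outside {1..n}; the finite field F_q is a type of class
  {finite, field} (every finite field has prime-power order and conversely).\<close>

definition vecs :: "nat \<Rightarrow> (nat \<Rightarrow> 'f::field) set" where
  "vecs n = {x. \<forall>i. i \<notin> {1..n} \<longrightarrow> x i = 0}"

definition supp :: "(nat \<Rightarrow> 'f::zero) \<Rightarrow> nat set" where
  "supp x = {i. x i \<noteq> 0}"

definition smult_vec :: "'f::field \<Rightarrow> (nat \<Rightarrow> 'f) \<Rightarrow> (nat \<Rightarrow> 'f)" where
  "smult_vec c x = (\<lambda>i. c * x i)"

definition is_covering :: "nat \<Rightarrow> nat set set \<Rightarrow> bool" where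
  "is_covering n F \<longleftrightarrow> (\<forall>A\<in>F. A \<subseteq> {1..n}) \<and> \<Union>F = {1..n}"

definition no_redundant :: "nat set set \<Rightarrow> bool" where
  "no_redundant F \<longleftrightarrow> \<not> (\<exists>A\<in>F. \<exists>B\<in>F. A \<subset> B)"

definition wtF :: "nat set set \<Rightarrow> (nat \<Rightarrow> 'f::zero) \<Rightarrow> nat" where
  "wtF F x = (LEAST k. \<exists>\<A>. \<A> \<subseteq> F \<and> finite \<A> \<and> card \<A> = k \<and> supp x \<subseteq> \<Union>\<A>)"

definition dF :: "nat set set \<Rightarrow> (nat \<Rightarrow> 'f::ab_group_add) \<Rightarrow> (nat \<Rightarrow> 'f) \<Rightarrow> nat" where
  "dF F x y = wtF F (x - y)"

definition linear_code :: "nat \<Rightarrow> (nat \<Rightarrow> 'f::field) set \<Rightarrow> bool" where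
  "linear_code n C \<longleftrightarrow> C \<subseteq> vecs n \<and> 0 \<in> C \<and>
     (\<forall>x\<in>C. \<forall>y\<in>C. x + y \<in> C) \<and> (\<forall>c. \<forall>x\<in>C. smult_vec c x \<in> C)"

definition linear_on :: "(nat \<Rightarrow> 'f::field) set \<Rightarrow> ((nat \<Rightarrow> 'f) \<Rightarrow> (nat \<Rightarrow> 'f)) \<Rightarrow> bool" where
  "linear_on C t \<longleftrightarrow> (\<forall>x\<in>C. \<forall>y\<in>C. t (x + y) = t x + t y) \<and>
     (\<forall>c. \<forall>x\<in>C. t (smult_vec c x) = smult_vec c (t x))"

definition local_equiv :: "nat set set \<Rightarrow> (nat \<Rightarrow> 'f::field) set \<Rightarrow> (nat \<Rightarrow> 'f) set
     \<Rightarrow> ((nat \<Rightarrow> 'f) \<Rightarrow> (nat \<Rightarrow> 'f)) \<Rightarrow> bool" where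
  "local_equiv F C1 C2 t \<longleftrightarrow> linear_on C1 t \<and> t ` C1 \<subseteq> C2 \<and> (\<forall>x\<in>C1. wtF F (t x) = wtF F x)"

definition linear_isometry :: "nat \<Rightarrow> nat set set \<Rightarrow> ((nat \<Rightarrow> 'f::field) \<Rightarrow> (nat \<Rightarrow> 'f)) \<Rightarrow> bool" where
  "linear_isometry n F T \<longleftrightarrow> linear_on (vecs n) T \<and> T ` vecs n \<subseteq> vecs n \<and>
     (\<forall>x\<in>vecs n. \<forall>y\<in>vecs n. dF F (T x) (T y) = dF F x y)"

definition MEP :: "'f::field itself \<Rightarrow> nat \<Rightarrow> nat set set \<Rightarrow> bool" where
  "MEP _ n F \<longleftrightarrow> (\<forall>(C1::(nat \<Rightarrow> 'f) set) C2 t. linear_code n C1 \<and> linear_code n C2 \<and>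
      local_equiv F C1 C2 t \<longrightarrow>
      (\<exists>T. linear_isometry n F T \<and> (\<forall>x\<in>C1. T x = t x)))"

definition connected_fam :: "nat set set \<Rightarrow> bool" where
  "connected_fam S \<longleftrightarrow> \<not> (\<exists>\<A> \<B>. \<A> \<noteq> {} \<and> \<B> \<noteq> {} \<and> S = \<A> \<union> \<B> \<and>
      (\<forall>A\<in>\<A>. \<forall>B\<in>\<B>. A \<inter> B = {}))"

definition components :: "nat set set \<Rightarrow> nat set set set" where
  "components F = {S. S \<subseteq> F \<and> connected_fam S \<and>
      (\<forall>S'. S \<subseteq> S' \<and> S' \<subseteq> F \<and> connected_fam S' \<longrightarrow> S' = S)}"

definition k_partition :: "nat \<Rightarrow> nat set set \<Rightarrow> nat \<Rightarrow> bool" where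
  "k_partition n F k \<longleftrightarrow> \<Union>F = {1..n} \<and> (\<forall>A\<in>F. A \<noteq> {} \<and> card A = k) \<and>
      (\<forall>A\<in>F. \<forall>B\<in>F. A \<noteq> B \<longrightarrow> A \<inter> B = {})"

end

theory Submission
  imports Defs "HOL-Library.FuncSet" "HOL.Vector_Spaces"
begin


lemma supp_smult: "c \<noteq> 0 \<Longrightarrow> supp (smult_vec c x) = supp x"
  by (auto simp: supp_def smult_vec_def)

lemma supp_zero[simp]: "supp (0::nat\<Rightarrow>'f::zero) = {}"
  by (auto simp: supp_def)

lemma supp_empty_iff: "supp x = {} \<longleftrightarrow> x = 0"
  by (auto simp: supp_def fun_eq_iff)

lemma vecs_supp: "x \<in> vecs n \<longleftrightarrow> supp x \<subseteq> {1..n}"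
  by (auto simp: vecs_def supp_def)

lemma covering_finite: "is_covering n F \<Longrightarrow> finite F"
  unfolding is_covering_def
  by (rule finite_subset[of F "Pow {1..n}"]) auto

lemma wt_le_iff:
  assumes "finite F" "supp x \<subseteq> \<Union>F"
  shows "wtF F x \<le> m \<longleftrightarrow> (\<exists>\<A>\<subseteq>F. card \<A> \<le> m \<and> supp x \<subseteq> \<Union>\<A>)"
proof -
  let ?P = "\<lambda>k. \<exists>\<A>. \<A> \<subseteq> F \<and> finite \<A> \<and> card \<A> = k \<and> supp x \<subseteq> \<Union>\<A>"
  have P: "?P (card F)" using assms by blast
  show ?thesis
  proof
    assume "wtF F x \<le> m"
    have "?P (wtF F x)" unfolding wtF_def by (rule LeastI[of ?P "card F", OF P])
    then obtain \<A> where a: "\<A> \<subseteq> F" "card \<A> = wtF F x" "supp x \<subseteq> \<Union>\<A>"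
      by (elim exE conjE) simp
    show "\<exists>\<A>\<subseteq>F. card \<A> \<le> m \<and> supp x \<subseteq> \<Union>\<A>"
      by (rule exI[of _ \<A>]) (use a \<open>wtF F x \<le> m\<close> in simp)
  next
    assume "\<exists>\<A>\<subseteq>F. card \<A> \<le> m \<and> supp x \<subseteq> \<Union>\<A>"
    then obtain \<A> where "\<A> \<subseteq> F" "card \<A> \<le> m" "supp x \<subseteq> \<Union>\<A>" by blast
    moreover have "finite \<A>" using \<open>\<A> \<subseteq> F\<close> assms(1) finite_subset by blast
    ultimately have "wtF F x \<le> card \<A>" unfolding wtF_def
      by (intro Least_le) blast
    thus "wtF F x \<le> m" using \<open>card \<A> \<le> m\<close> by simp
  qed
qed

lemma wt_supp_cong: "supp x = supp y \<Longrightarrow> wtF F x = wtF F y"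
  by (simp add: wtF_def)

lemma wt_le0_iff:
  assumes "finite F" "supp x \<subseteq> \<Union>F"
  shows "wtF F x = 0 \<longleftrightarrow> x = 0"
proof -
  have "wtF F x \<le> 0 \<longleftrightarrow> supp x = {}"
    using wt_le_iff[OF assms, of 0] by (auto dest: card_eq_0_iff[THEN iffD1] intro: finite_subset[OF _ assms(1)])
  thus ?thesis using supp_empty_iff by auto
qed

lemma wt_le1_iff:
  assumes "finite F" "supp x \<subseteq> \<Union>F"
  shows "wtF F x \<le> 1 \<longleftrightarrow> x = 0 \<or> (\<exists>A\<in>F. supp x \<subseteq> A)"
proof -
  have "(\<exists>\<A>\<subseteq>F. card \<A> \<le> 1 \<and> supp x \<subseteq> \<Union>\<A>) \<longleftrightarrow> supp x = {} \<or> (\<exists>A\<in>F. supp x \<subseteq> A)"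
  proof
    assume "\<exists>\<A>\<subseteq>F. card \<A> \<le> 1 \<and> supp x \<subseteq> \<Union>\<A>"
    then obtain \<A> where a: "\<A>\<subseteq>F" "card \<A> \<le> 1" "supp x \<subseteq> \<Union>\<A>" by blast
    have "finite \<A>" using a(1) assms(1) finite_subset by blast
    then have "\<A> = {} \<or> (\<exists>A. \<A> = {A})" using a(2)
      by (metis card_1_singletonE le_SucE le_zero_eq card_0_eq One_nat_def)
    thus "supp x = {} \<or> (\<exists>A\<in>F. supp x \<subseteq> A)" using a by auto
  next
    assume "supp x = {} \<or> (\<exists>A\<in>F. supp x \<subseteq> A)"
    thus "\<exists>\<A>\<subseteq>F. card \<A> \<le> 1 \<and> supp x \<subseteq> \<Union>\<A>"
    proof
      assume "supp x = {}" thus ?thesis by (intro exI[of _ "{}"]) auto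
    next
      assume "\<exists>A\<in>F. supp x \<subseteq> A"
      then obtain A where "A \<in> F" "supp x \<subseteq> A" by blast
      thus ?thesis by (intro exI[of _ "{A}"]) auto
    qed
  qed
  thus ?thesis using wt_le_iff[OF assms, of 1] supp_empty_iff by metis
qed


lemma connected_famD: "connected_fam S \<Longrightarrow> S = P \<union> Q \<Longrightarrow> \<forall>A\<in>P. \<forall>B\<in>Q. A \<inter> B = {} \<Longrightarrow> P = {} \<or> Q = {}"
  unfolding connected_fam_def by blast

lemma connected_union:
  assumes "connected_fam S" "connected_fam S'" "D \<in> S" "E \<in> S'" "D \<inter> E \<noteq> {}"
    "{} \<notin> S" "{} \<notin> S'"
  shows "connected_fam (S \<union> S')"
proof -
  have split: "X \<subseteq> \<A> \<or> X \<subseteq> \<B>" if "connected_fam X" "X \<subseteq> \<A> \<union> \<B>"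
     "\<forall>A\<in>\<A>. \<forall>B\<in>\<B>. A \<inter> B = {}" for X \<A> \<B>
  proof -
    have "X = (X \<inter> \<A>) \<union> (X \<inter> \<B>)" using that(2) by blast
    moreover have "\<forall>A\<in>X \<inter> \<A>. \<forall>B\<in>X \<inter> \<B>. A \<inter> B = {}" using that(3) by blast
    ultimately have "X \<inter> \<A> = {} \<or> X \<inter> \<B> = {}" using that(1) connected_famD by blast
    thus ?thesis using that(2) by blast
  qed
  show ?thesis unfolding connected_fam_def
  proof clarify
    fix \<A> \<B> assume ne: "\<A> \<noteq> {}" "\<B> \<noteq> {}" and eq: "S \<union> S' = \<A> \<union> \<B>"
      and dis: "\<forall>A\<in>\<A>. \<forall>B\<in>\<B>. A \<inter> B = {}"
    have 1: "S \<subseteq> \<A> \<or> S \<subseteq> \<B>" using split[OF assms(1) _ dis] eq by blast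
    have 2: "S' \<subseteq> \<A> \<or> S' \<subseteq> \<B>" using split[OF assms(2) _ dis] eq by blast
    have nz: "X \<notin> \<A> \<inter> \<B>" for X
    proof
      assume "X \<in> \<A> \<inter> \<B>"
      hence "X = {}" using dis by blast
      moreover have "X \<in> S \<union> S'" using \<open>X \<in> \<A> \<inter> \<B>\<close> eq by blast
      ultimately show False using assms(6,7) by blast
    qed
    show False
    proof (cases "S \<subseteq> \<A>")
      case True
      show False
      proof (cases "S' \<subseteq> \<A>")
        case True
        obtain X where "X \<in> \<B>" using ne by blast
        thus False using True \<open>S \<subseteq> \<A>\<close> eq nz by blast
      next
        case False
        hence "S' \<subseteq> \<B>" using 2 by blast
        thus False using dis assms(3,4,5) \<open>S \<subseteq> \<A>\<close> by blast
      qed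
    next
      case False
      hence SB: "S \<subseteq> \<B>" using 1 by blast
      show False
      proof (cases "S' \<subseteq> \<A>")
        case True
        thus False using dis assms(3,4,5) SB by blast
      next
        case False
        hence "S' \<subseteq> \<B>" using 2 by blast
        obtain X where "X \<in> \<A>" using ne by blast
        thus False using SB \<open>S' \<subseteq> \<B>\<close> eq nz by blast
      qed
    qed
  qed
qed


lemma comp_inter_eq:
  assumes "S \<in> components F" "S' \<in> components F" "D \<in> S" "E \<in> S'" "D \<inter> E \<noteq> {}" "{} \<notin> F"
  shows "S = S'"
proof -
  have c: "connected_fam S" "connected_fam S'" "S \<subseteq> F" "S' \<subseteq> F"
    and m: "\<forall>S''. S \<subseteq> S'' \<and> S'' \<subseteq> F \<and> connected_fam S'' \<longrightarrow> S'' = S"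
      "\<forall>S''. S' \<subseteq> S'' \<and> S'' \<subseteq> F \<and> connected_fam S'' \<longrightarrow> S'' = S'"
    using assms(1,2) unfolding components_def by auto
  have "connected_fam (S \<union> S')"
    using connected_union[OF c(1,2) assms(3,4,5)] c(3,4) assms(6) by blast
  hence "S \<union> S' = S" "S \<union> S' = S'" using m c by auto
  thus ?thesis by simp
qed

lemma singleton_connected: assumes "D \<noteq> {}" shows "connected_fam {D}"
  unfolding connected_fam_def
proof (intro notI, elim exE conjE)
  fix P Q assume h: "P \<noteq> {}" "Q \<noteq> {}" "{D} = P \<union> Q" "\<forall>A\<in>P. \<forall>B\<in>Q. A \<inter> B = {}"
  have "P \<subseteq> {D}" "Q \<subseteq> {D}" using h(3) by auto
  hence "D \<in> P" "D \<in> Q" using h(1,2) by blast+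
  thus False using h(4) assms by blast
qed

lemma in_some_component:
  assumes "finite F" "D \<in> F" "{} \<notin> F"
  shows "\<exists>S\<in>components F. D \<in> S"
proof -
  let ?C = "{S. D \<in> S \<and> S \<subseteq> F \<and> connected_fam S}"
  have "D \<noteq> {}" using assms by auto
  hence ne: "{D} \<in> ?C" using assms singleton_connected by auto
  have fin: "finite (card ` ?C)"
    by (rule finite_subset[of _ "{..card F}"]) (auto intro: card_mono[OF assms(1)])
  obtain S where S: "S \<in> ?C" "card S = Max (card ` ?C)"
    using Max_in[OF fin] ne by force
  have "S \<in> components F"
    unfolding components_def
  proof (intro CollectI conjI allI impI)
    show "connected_fam S" "S \<subseteq> F" using S by auto
  next
    fix S'' assume h: "S \<subseteq> S'' \<and> S'' \<subseteq> F \<and> connected_fam S''"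
    have "S'' \<in> ?C" using h S by auto
    hence "card S'' \<le> card S" using S(2) fin by auto
    moreover have "finite S''" using h assms(1) finite_subset by blast
    moreover have "card S \<le> card S''" using h \<open>finite S''\<close> by (intro card_mono) auto
    ultimately show "S'' = S" using h card_subset_eq[of S'' S] by simp
  qed
  thus ?thesis using S by blast
qed

lemma component_nonempty:
  assumes "S \<in> components F" "F \<noteq> {}" "{} \<notin> F"
  shows "S \<noteq> {}"
proof
  assume "S = {}"
  obtain D where "D \<in> F" using assms(2) by blast
  moreover have "D \<noteq> {}" using \<open>D \<in> F\<close> assms(3) by auto
  ultimately have "{D} \<subseteq> F" "connected_fam {D}" using singleton_connected by auto
  thus False using assms(1) \<open>S = {}\<close> unfolding components_def by blast
qed


lemma disjoint_comp_single:
  assumes "S \<in> components F" "D \<in> S" "\<forall>A\<in>F. \<forall>B\<in>F. A \<noteq> B \<longrightarrow> A \<inter> B = {}"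
  shows "S = {D}"
proof (rule ccontr)
  assume ne: "S \<noteq> {D}"
  have SF: "S \<subseteq> F" "connected_fam S" using assms(1) unfolding components_def by auto
  have 1: "S - {D} \<noteq> {}" using ne assms(2) by auto
  have 2: "S = {D} \<union> (S - {D})" using assms(2) by auto
  have 3: "\<forall>A\<in>{D}. \<forall>B\<in>S - {D}. A \<inter> B = {}"
  proof (intro ballI)
    fix A B assume "A \<in> {D}" "B \<in> S - {D}"
    thus "A \<inter> B = {}" using assms(3) SF(1) assms(2) by auto
  qed
  have "{D} = {} \<or> S - {D} = {}" by (rule connected_famD[OF SF(2) 2 3])
  thus False using 1 by simp
qed


lemma disjoint_two:
  assumes "finite F" "{} \<notin> F" "\<forall>A\<in>F. \<forall>B\<in>F. A \<noteq> B \<longrightarrow> A \<inter> B = {}"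
    "card (components F) = 2"
  shows "\<exists>A B. F = {A, B} \<and> A \<noteq> B \<and> A \<inter> B = {}"
proof -
  have "F \<noteq> {}"
  proof
    assume "F = {}"
    have "S \<subseteq> F" if "S \<in> components F" for S using that unfolding components_def by simp
    hence "components F \<subseteq> {{}}" using \<open>F = {}\<close> by auto
    hence "card (components F) \<le> card {{}::nat set}" using card_mono[of "{{}}" "components F"] by simp
    thus False using assms(4) by simp
  qed
  have "components F = (\<lambda>D. {D}) ` F"
  proof (rule set_eqI, rule iffI)
    fix S assume S: "S \<in> components F"
    obtain D where D: "D \<in> S" using component_nonempty[OF S \<open>F \<noteq> {}\<close> assms(2)] by blast
    have "S \<subseteq> F" using S unfolding components_def by auto
    hence "D \<in> F" using D by auto
    thus "S \<in> (\<lambda>D. {D}) ` F" using disjoint_comp_single[OF S D assms(3)] by simp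
  next
    fix S assume "S \<in> (\<lambda>D. {D}) ` F"
    then obtain D where D: "D \<in> F" "S = {D}" by auto
    obtain S' where S': "S' \<in> components F" "D \<in> S'" using in_some_component[OF assms(1) D(1) assms(2)] by auto
    thus "S \<in> components F" using disjoint_comp_single[OF S' assms(3)] D by simp
  qed
  moreover have "inj_on (\<lambda>D. {D}) F" by (auto simp: inj_on_def)
  ultimately have "card F = 2" using assms(4) card_image by metis
  then obtain A B where AB: "F = {A, B}" "A \<noteq> B" unfolding card_2_iff by auto
  show ?thesis
    by (rule exI[of _ A], rule exI[of _ B]) (use AB assms(3) in auto)
qed


lemma smult_vec_apply[simp]: "smult_vec c x m = c * x m"
  by (simp add: smult_vec_def)

lemma vecs_add: "x \<in> vecs n \<Longrightarrow> y \<in> vecs n \<Longrightarrow> x + y \<in> vecs n"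
  by (simp add: vecs_def)
lemma vecs_diff: "x \<in> vecs n \<Longrightarrow> y \<in> vecs n \<Longrightarrow> x - y \<in> vecs n"
  by (simp add: vecs_def)
lemma vecs_smult: "x \<in> vecs n \<Longrightarrow> smult_vec c x \<in> vecs n"
  by (simp add: vecs_def)
lemma vecs_zero: "0 \<in> vecs n"
  by (simp add: vecs_def)

lemma wt_zero[simp]: "wtF F 0 = 0"
  unfolding wtF_def by (rule Least_eq_0) (rule exI[of _ "{}"], simp)

lemma iso_facts:
  fixes T :: "(nat \<Rightarrow> 'f::field) \<Rightarrow> (nat \<Rightarrow> 'f)"
  assumes iso: "linear_isometry n F T" and fin: "finite F" and cov: "\<Union>F = {1..n}"
  shows "T 0 = 0"
    and "\<And>x y. x \<in> vecs n \<Longrightarrow> y \<in> vecs n \<Longrightarrow> T (x - y) = T x - T y"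
    and "\<And>x. x \<in> vecs n \<Longrightarrow> T x \<in> vecs n"
    and "\<And>x. x \<in> vecs n \<Longrightarrow> wtF F (T x) = wtF F x"
    and "inj_on T (vecs n)"
proof -
  have lin: "\<And>x y. x \<in> vecs n \<Longrightarrow> y \<in> vecs n \<Longrightarrow> T (x + y) = T x + T y"
    "\<And>c x. x \<in> vecs n \<Longrightarrow> T (smult_vec c x) = smult_vec c (T x)"
    and img: "\<And>x. x \<in> vecs n \<Longrightarrow> T x \<in> vecs n"
    and dist: "\<And>x y. x \<in> vecs n \<Longrightarrow> y \<in> vecs n \<Longrightarrow> dF F (T x) (T y) = dF F x y"
    using iso unfolding linear_isometry_def linear_on_def by auto
  show T0: "T 0 = 0"
  proof -
    have "T (smult_vec 0 0) = smult_vec 0 (T 0)" using lin(2)[OF vecs_zero] .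
    moreover have "smult_vec (0::'f) 0 = (0::nat\<Rightarrow>'f)" by (simp add: fun_eq_iff)
    moreover have "smult_vec (0::'f) (T 0) = 0" by (simp add: fun_eq_iff)
    ultimately show ?thesis by simp
  qed
  show diff: "T (x - y) = T x - T y" if "x \<in> vecs n" "y \<in> vecs n" for x y
  proof -
    have e: "x - y = x + smult_vec (-1) y" by (simp add: fun_eq_iff)
    have "T (x - y) = T x + smult_vec (-1) (T y)"
      unfolding e using lin(1)[OF that(1) vecs_smult[OF that(2)]] lin(2)[OF that(2)] by simp
    also have "\<dots> = T x - T y" by (simp add: fun_eq_iff)
    finally show ?thesis .
  qed
  show "T x \<in> vecs n" if "x \<in> vecs n" for x using img that .
  show wt: "wtF F (T x) = wtF F x" if "x \<in> vecs n" for x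
  proof -
    have "dF F (T x) (T 0) = dF F x 0" using dist[OF that vecs_zero] .
    thus ?thesis unfolding dF_def T0 by simp
  qed
  show "inj_on T (vecs n)"
  proof (rule inj_onI)
    fix x y assume xy: "x \<in> vecs n" "y \<in> vecs n" "T x = T y"
    have "wtF F (x - y) = dF F (T x) (T y)" using dist[OF xy(1,2)] by (simp add: dF_def)
    also have "\<dots> = 0" using xy(3) by (simp add: dF_def)
    finally have "wtF F (x - y) = 0" .
    moreover have "supp (x - y) \<subseteq> \<Union>F" using vecs_diff[OF xy(1,2)] cov vecs_supp by metis
    ultimately have "x - y = 0" using wt_le0_iff[OF fin] by blast
    thus "x = y" by simp
  qed
qed

lemma MEP_1dim:
  fixes x y :: "nat \<Rightarrow> 'f::{finite,field}"
  assumes mep: "MEP TYPE('f) n F" and x: "x \<in> vecs n" and y: "y \<in> vecs n" and xk: "x k = 1"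
    and w: "wtF F x = wtF F y"
  shows "\<exists>T. linear_isometry n F T \<and> T x = y"
proof -
  define C1 where "C1 = range (\<lambda>c. smult_vec c x)"
  define C2 where "C2 = range (\<lambda>c. smult_vec c y)"
  define t where "t = (\<lambda>v::nat\<Rightarrow>'f. smult_vec (v k) y)"
  have code: "linear_code n (range (\<lambda>c. smult_vec c z))" if "z \<in> vecs n" for z :: "nat \<Rightarrow> 'f"
    unfolding linear_code_def
  proof (intro conjI ballI allI)
    show "range (\<lambda>c. smult_vec c z) \<subseteq> vecs n" using vecs_smult[OF that] by auto
    show "0 \<in> range (\<lambda>c. smult_vec c z)" by (rule range_eqI[of _ _ 0]) (simp add: fun_eq_iff)
  next
    fix u v assume "u \<in> range (\<lambda>c. smult_vec c z)" "v \<in> range (\<lambda>c. smult_vec c z)"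
    then obtain a b where "u = smult_vec a z" "v = smult_vec b z" by auto
    thus "u + v \<in> range (\<lambda>c. smult_vec c z)"
      by (intro range_eqI[of _ _ "a + b"]) (simp add: fun_eq_iff distrib_right)
  next
    fix c u assume "u \<in> range (\<lambda>c. smult_vec c z)"
    then obtain a where "u = smult_vec a z" by auto
    thus "smult_vec c u \<in> range (\<lambda>c. smult_vec c z)"
      by (intro range_eqI[of _ _ "c * a"]) (simp add: fun_eq_iff mult.assoc)
  qed
  have le: "local_equiv F C1 C2 t"
    unfolding local_equiv_def linear_on_def
  proof (intro conjI ballI allI)
    fix u v assume "u \<in> C1" "v \<in> C1"
    show "t (u + v) = t u + t v" by (simp add: t_def fun_eq_iff distrib_right)
  next
    fix c u assume "u \<in> C1"
    show "t (smult_vec c u) = smult_vec c (t u)" by (simp add: t_def fun_eq_iff mult.assoc)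
  next
    show "t ` C1 \<subseteq> C2" unfolding C1_def C2_def t_def using xk by auto
  next
    fix u assume "u \<in> C1"
    then obtain c where u: "u = smult_vec c x" unfolding C1_def by auto
    have tu: "t u = smult_vec c y" using xk by (simp add: t_def u)
    show "wtF F (t u) = wtF F u"
    proof (cases "c = 0")
      case True
      hence "supp (smult_vec c y) = supp (smult_vec c x)" by (simp add: supp_def)
      hence "wtF F (smult_vec c y) = wtF F (smult_vec c x)" by (rule wt_supp_cong)
      thus ?thesis using tu u by simp
    next
      case False
      hence "wtF F (smult_vec c y) = wtF F y" "wtF F (smult_vec c x) = wtF F x"
        using wt_supp_cong supp_smult by metis+
      thus ?thesis using w tu u by simp
    qed
  qed
  have m: "\<forall>(C1::(nat \<Rightarrow> 'f) set) C2 t. linear_code n C1 \<and> linear_code n C2 \<and>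
      local_equiv F C1 C2 t \<longrightarrow> (\<exists>T. linear_isometry n F T \<and> (\<forall>x\<in>C1. T x = t x))"
    using mep unfolding MEP_def .
  have "\<exists>T. linear_isometry n F T \<and> (\<forall>z\<in>C1. T z = t z)"
    using spec[OF spec[OF spec[OF m, of C1], of C2], of t] code[OF x] code[OF y] le
    unfolding C1_def C2_def by simp
  then obtain T where T: "linear_isometry n F T" "\<forall>z\<in>C1. T z = t z" by auto
  have "x \<in> C1" unfolding C1_def by (rule range_eqI[of _ _ 1]) (simp add: fun_eq_iff)
  hence "T x = t x" using T by simp
  also have "\<dots> = y" using xk by (simp add: t_def fun_eq_iff)
  finally show ?thesis using T(1) by auto
qed


definition ind :: "nat set \<Rightarrow> nat \<Rightarrow> 'f::field" where
  "ind S = (\<lambda>m. if m \<in> S then 1 else 0)"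

lemma supp_ind[simp]: "supp (ind S :: nat \<Rightarrow> 'f::field) = S"
  by (simp add: supp_def ind_def)

lemma ind_vecs: "S \<subseteq> {1..n} \<Longrightarrow> (ind S :: nat \<Rightarrow> 'f::field) \<in> vecs n"
  using vecs_supp[of "ind S" n] by simp

lemma ind_diff: "S \<subseteq> U \<Longrightarrow> (ind U :: nat \<Rightarrow> 'f::field) - ind S = ind (U - S)"
  by (auto simp: ind_def fun_eq_iff)

lemma ind_inj: "(ind S :: nat \<Rightarrow> 'f::field) = ind U \<Longrightarrow> S = U"
  by (metis supp_ind)

lemma wt_le1_sub:
  assumes "finite F" "supp v \<subseteq> \<Union>F" "D \<in> F" "supp v \<subseteq> D"
  shows "wtF F v \<le> 1"
  using wt_le1_iff[OF assms(1,2)] assms(3,4) by blast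

lemma wt_eq2:
  assumes fin: "finite F" and s: "supp v \<subseteq> \<Union>F" and D: "D \<in> F" and E: "E \<in> F"
    and DE: "supp v \<subseteq> D \<union> E" and no1: "\<And>C. C \<in> F \<Longrightarrow> \<not> supp v \<subseteq> C" and nz: "v \<noteq> 0"
  shows "wtF F v = 2"
proof -
  have "card {D, E} \<le> 2" by (simp add: card_insert_le_m1)
  hence "wtF F v \<le> 2" using wt_le_iff[OF fin s, of 2] D E DE by (metis Union_insert ccpo_Sup_singleton empty_subsetI insert_subsetI)
  moreover have "\<not> wtF F v \<le> 1" using wt_le1_iff[OF fin s] no1 nz by blast
  ultimately show ?thesis by simp
qed

lemma R_y:
  fixes w :: "nat \<Rightarrow> 'f::field"
  assumes fin: "finite F" and cov: "\<Union>F = {1..n}"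
    and P2: "\<forall>D\<in>F. \<forall>E\<in>F. i \<in> D \<longrightarrow> j \<in> E \<longrightarrow> D \<inter> E = {}"
    and iF: "i \<in> \<Union>F" and jF: "j \<in> \<Union>F"
    and w: "w \<in> vecs n" and w1: "wtF F w \<le> 1" and z1: "wtF F (ind {i, j} - w) \<le> 1"
  shows "w = ind {i} \<or> w = ind {j}"
proof -
  obtain D0 where D0: "D0 \<in> F" "i \<in> D0" using iF by auto
  obtain E0 where E0: "E0 \<in> F" "j \<in> E0" using jF by auto
  have ij: "i \<noteq> j"
  proof
    assume "i = j"
    hence "i \<in> D0 \<inter> E0" using D0 E0 by simp
    thus False using P2 D0 E0 by auto
  qed
  define z where "z = ind {i, j} - w"
  have zc: "z m = (if m = i \<or> m = j then 1 else 0) - w m" for m by (simp add: z_def ind_def)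
  have ijn: "i \<in> {1..n}" "j \<in> {1..n}" using iF jF cov by auto
  have zv: "z \<in> vecs n" unfolding z_def using vecs_diff[OF ind_vecs w, of "{i,j}"] ijn by simp
  have ws: "supp w \<subseteq> \<Union>F" using w cov vecs_supp by metis
  have zs: "supp z \<subseteq> \<Union>F" using zv cov vecs_supp by metis
  have wc: "w = 0 \<or> (\<exists>D\<in>F. supp w \<subseteq> D)" using wt_le1_iff[OF fin ws] w1 by blast
  have zcase: "z = 0 \<or> (\<exists>E\<in>F. supp z \<subseteq> E)" using wt_le1_iff[OF fin zs] z1 unfolding z_def by blast
  have out: "v m = 0" if "supp v \<subseteq> X" "m \<notin> X" for v :: "nat \<Rightarrow> 'f" and X m
    using that by (auto simp: supp_def)
  have notboth: "\<not> (i \<in> C \<and> j \<in> C)" if "C \<in> F" for C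
    using P2 that by auto
  show ?thesis
  proof (cases "w = 0")
    case True
    hence zz: "z i = 1" "z j = 1" using zc ij by auto
    hence "z \<noteq> 0" by auto
    then obtain E where E: "E \<in> F" "supp z \<subseteq> E" using zcase by blast
    have "i \<in> E" "j \<in> E" using E(2) zz by (auto simp: supp_def)
    thus ?thesis using notboth[OF E(1)] by simp
  next
    case False
    then obtain D where D: "D \<in> F" "supp w \<subseteq> D" using wc by blast
    show ?thesis
    proof (cases "z = 0")
      case True
      hence ww: "w i = 1" "w j = 1" using zc[of i] zc[of j] ij by (auto simp: fun_eq_iff)
      have "i \<in> D" "j \<in> D" using D(2) ww by (auto simp: supp_def)
      thus ?thesis using notboth[OF D(1)] by simp
    next
      case False
      then obtain E where E: "E \<in> F" "supp z \<subseteq> E" using zcase by blast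
      show ?thesis
      proof (cases "i \<in> D")
        case True
        have jD: "j \<notin> D" using notboth[OF D(1)] True by blast
        hence wj: "w j = 0" using out[OF D(2)] by blast
        hence "z j = 1" using zc[of j] by simp
        hence jE: "j \<in> E" using E(2) by (auto simp: supp_def)
        have DE: "D \<inter> E = {}" using P2 D(1) E(1) True jE by auto
        hence "i \<notin> E" using True by auto
        hence "z i = 0" using out[OF E(2)] by blast
        hence wi: "w i = 1" using zc[of i] by simp
        have "w m = ind {i} m" for m
        proof (cases "m = i \<or> m = j")
          case True thus ?thesis using wi wj ij by (auto simp: ind_def)
        next
          case False
          hence zm: "z m = - w m" using zc[of m] by simp
          show ?thesis
          proof (rule ccontr)
            assume "w m \<noteq> ind {i} m"
            hence "w m \<noteq> 0" using False by (simp add: ind_def)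
            hence "m \<in> D" "m \<in> E" using D(2) E(2) zm by (auto simp: supp_def)
            thus False using DE by auto
          qed
        qed
        thus ?thesis by (simp add: fun_eq_iff)
      next
        case False
        hence wi: "w i = 0" using out[OF D(2)] by blast
        hence "z i = 1" using zc[of i] by simp
        hence iE: "i \<in> E" using E(2) by (auto simp: supp_def)
        have jE: "j \<notin> E" using notboth[OF E(1)] iE by blast
        hence "z j = 0" using out[OF E(2)] by blast
        hence wj: "w j = 1" using zc[of j] ij by simp
        hence jD: "j \<in> D" using D(2) by (auto simp: supp_def)
        have ED: "E \<inter> D = {}" using P2 D(1) E(1) iE jD by auto
        have "w m = ind {j} m" for m
        proof (cases "m = i \<or> m = j")
          case True thus ?thesis using wi wj ij by (auto simp: ind_def)
        next
          case False
          hence zm: "z m = - w m" using zc[of m] by simp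
          show ?thesis
          proof (rule ccontr)
            assume "w m \<noteq> ind {j} m"
            hence "w m \<noteq> 0" using False by (simp add: ind_def)
            hence "m \<in> D" "m \<in> E" using D(2) E(2) zm by (auto simp: supp_def)
            thus False using ED by auto
          qed
        qed
        thus ?thesis by (simp add: fun_eq_iff)
      qed
    qed
  qed
qed


lemma case_b_false:
  fixes T :: "(nat \<Rightarrow> 'f::field) \<Rightarrow> (nat \<Rightarrow> 'f)"
  assumes fin: "finite F" and cov: "\<Union>F = {1..n}" and nr: "no_redundant F"
    and A: "A \<in> F" and A': "A' \<in> F" and AA: "A \<noteq> A'" and iA: "i \<in> A" "i \<in> A'"
    and P2: "\<forall>D\<in>F. \<forall>E\<in>F. i \<in> D \<longrightarrow> j \<in> E \<longrightarrow> D \<inter> E = {}"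
    and jF: "j \<in> \<Union>F"
    and iso: "linear_isometry n F T" and Tx: "T (ind (A \<union> A')) = ind {i, j}"
  shows False
proof -
  note I = iso_facts[OF iso fin cov]
  define x :: "nat \<Rightarrow> 'f" where "x = ind (A \<union> A')"
  have AU: "A \<subseteq> {1..n}" "A' \<subseteq> {1..n}" using A A' cov by auto
  have xv: "x \<in> vecs n" unfolding x_def using AU by (intro ind_vecs) auto
  have good: "T w = ind {i} \<or> T w = ind {j}" if wS: "S \<subseteq> A \<union> A'" and S1: "S \<subseteq> A \<or> S \<subseteq> A'"
     and S2: "A \<union> A' - S \<subseteq> A \<or> A \<union> A' - S \<subseteq> A'" and wdef: "w = ind S" for w S
  proof -
    have wv: "w \<in> vecs n" unfolding wdef using wS AU by (intro ind_vecs) auto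
    have ws: "supp w \<subseteq> \<Union>F" using wv cov vecs_supp by metis
    have w1: "wtF F w \<le> 1" using S1 wt_le1_sub[OF fin ws A] wt_le1_sub[OF fin ws A'] wdef by auto
    have d: "x - w = ind (A \<union> A' - S)" unfolding x_def wdef by (rule ind_diff[OF wS])
    have dv: "x - w \<in> vecs n" using vecs_diff[OF xv wv] .
    have ds: "supp (x - w) \<subseteq> \<Union>F" using dv cov vecs_supp by metis
    have d1: "wtF F (x - w) \<le> 1" using S2 wt_le1_sub[OF fin ds A] wt_le1_sub[OF fin ds A'] d by auto
    have Tw1: "wtF F (T w) \<le> 1" using I(4)[OF wv] w1 by simp
    have "ind {i, j} - T w = T (x - w)" using I(2)[OF xv wv] Tx x_def by simp
    hence Td1: "wtF F (ind {i, j} - T w) \<le> 1" using I(4)[OF dv] d1 by simp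
    have iF: "i \<in> \<Union>F" using iA A by auto
    show ?thesis using R_y[OF fin cov P2 iF jF I(3)[OF wv] Tw1 Td1] .
  qed
  have nsub: "\<not> A \<subseteq> A'" "\<not> A' \<subseteq> A" using nr A A' AA unfolding no_redundant_def by auto
  define w1 :: "nat \<Rightarrow> 'f" where "w1 = ind A"
  define w2 :: "nat \<Rightarrow> 'f" where "w2 = ind A'"
  define w3 :: "nat \<Rightarrow> 'f" where "w3 = ind (A - A')"
  have g1: "T w1 \<in> {ind {i}, ind {j}}"
    using good[of A w1] w1_def by (auto simp: Diff_subset_conv)
  have g2: "T w2 \<in> {ind {i}, ind {j}}"
    using good[of A' w2] w2_def by auto
  have g3: "T w3 \<in> {ind {i}, ind {j}}"
  proof -
    have "A \<union> A' - (A - A') = A'" by auto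
    thus ?thesis using good[of "A - A'" w3] w3_def by auto
  qed
  have d12: "w1 \<noteq> w2" using AA ind_inj unfolding w1_def w2_def by metis
  have d13: "w1 \<noteq> w3" using iA unfolding w1_def w3_def by (auto simp: fun_eq_iff ind_def)
  have d23: "w2 \<noteq> w3" using iA unfolding w2_def w3_def by (auto simp: fun_eq_iff ind_def)
  have vs: "{w1, w2, w3} \<subseteq> vecs n" unfolding w1_def w2_def w3_def using AU
    by (auto intro!: ind_vecs)
  have inj: "inj_on T {w1, w2, w3}" using inj_on_subset[OF I(5) vs] .
  have "card (T ` {w1, w2, w3}) = 3" using card_image[OF inj] d12 d13 d23 by simp
  moreover have "T ` {w1, w2, w3} \<subseteq> {ind {i}, ind {j}}" using g1 g2 g3 by auto
  hence "card (T ` {w1, w2, w3}) \<le> card {ind {i} :: nat \<Rightarrow> 'f, ind {j}}" by (intro card_mono) auto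
  moreover have "card {ind {i} :: nat \<Rightarrow> 'f, ind {j}} \<le> 2" by (rule card_insert_le_m1) auto
  ultimately show False by simp
qed


lemma supp_diff_sub: "supp (u - v) \<subseteq> supp u \<union> supp (v :: nat \<Rightarrow> 'f::ab_group_add)"
  by (auto simp: supp_def)
lemma supp_add_sub: "supp (u + v) \<subseteq> supp u \<union> supp (v :: nat \<Rightarrow> 'f::ab_group_add)"
  by (auto simp: supp_def)


lemma card_V:
  assumes "X \<subseteq> {1..n}"
  shows "card {x :: nat \<Rightarrow> 'f::{finite,field}. x \<in> vecs n \<and> supp x \<subseteq> X} = card (UNIV :: 'f set) ^ card X"
proof -
  let ?V = "{x :: nat \<Rightarrow> 'f. x \<in> vecs n \<and> supp x \<subseteq> X}"
  let ?PP = "PiE X (\<lambda>_. UNIV :: 'f set)"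
  have fX: "finite X" using assms finite_subset by blast
  have "bij_betw (\<lambda>x. restrict x X) ?V ?PP"
  proof (rule bij_betw_byWitness[where f' = "\<lambda>h m. if m \<in> X then h m else 0"])
    show "\<forall>a\<in>?V. (\<lambda>m. if m \<in> X then restrict a X m else 0) = a"
      by (auto simp: fun_eq_iff supp_def)
    show "\<forall>a'\<in>?PP. restrict (\<lambda>m. if m \<in> X then a' m else 0) X = a'"
      by (auto simp: fun_eq_iff PiE_def extensional_def)
    show "(\<lambda>x. restrict x X) ` ?V \<subseteq> ?PP" by auto
    show "(\<lambda>h m. if m \<in> X then h m else 0) ` ?PP \<subseteq> ?V"
      using assms by (auto simp: vecs_def supp_def)
  qed
  hence "card ?V = card ?PP" by (rule bij_betw_same_card)
  also have "\<dots> = card (UNIV :: 'f set) ^ card X" using card_PiE[OF fX, of "\<lambda>_. UNIV :: 'f set"] by simp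
  finally show ?thesis .
qed

lemma card_field_ge2: "card (UNIV :: 'f::{finite,field} set) \<ge> 2"
proof -
  have "card {0::'f, 1} = 2" by simp
  moreover have "card {0::'f, 1} \<le> card (UNIV :: 'f set)" by (rule card_mono) auto
  ultimately show ?thesis by simp
qed

lemma case_a_false:
  fixes T :: "(nat \<Rightarrow> 'f::{finite,field}) \<Rightarrow> (nat \<Rightarrow> 'f)"
  assumes fin: "finite F" and cov: "\<Union>F = {1..n}" and FAB: "F = {A, B}" and AB: "A \<inter> B = {}"
    and cAB: "card B < card A"
    and iso: "linear_isometry n F T" and i: "i \<in> A" and j: "j \<in> B"
    and Tij: "T (ind {i}) = ind {j}"
  shows False
proof -
  note I = iso_facts[OF iso fin cov]
  have add: "T (u + v) = T u + T v" if "u \<in> vecs n" "v \<in> vecs n" for u v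
    using iso that unfolding linear_isometry_def linear_on_def by auto
  define VA where "VA = {x :: nat \<Rightarrow> 'f. x \<in> vecs n \<and> supp x \<subseteq> A}"
  define VB where "VB = {x :: nat \<Rightarrow> 'f. x \<in> vecs n \<and> supp x \<subseteq> B}"
  have AU: "A \<subseteq> {1..n}" "B \<subseteq> {1..n}" using cov FAB by auto
  have cVA: "card VA = card (UNIV :: 'f set) ^ card A" unfolding VA_def by (rule card_V[OF AU(1)])
  have cVB: "card VB = card (UNIV :: 'f set) ^ card B" unfolding VB_def by (rule card_V[OF AU(2)])
  have finVB: "finite VB" using cVB card_field_ge2[where 'f='f]
    by (metis card.infinite not_numeral_le_zero power_not_zero)
  have diffA: "u - v \<in> VA" if "u \<in> VA" "v \<in> VA" for u v
    using that supp_diff_sub[of u v] unfolding VA_def by (auto simp: vecs_diff)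
  have diffB: "u - v \<in> VB" if "u \<in> VB" "v \<in> VB" for u v
    using that supp_diff_sub[of u v] unfolding VB_def by (auto simp: vecs_diff)
  have into: "T v \<in> VA \<or> T v \<in> VB" if "v \<in> VA" for v
  proof -
    have v: "v \<in> vecs n" "supp v \<subseteq> A" using that VA_def by auto
    have vs: "supp v \<subseteq> \<Union>F" using v(1) cov vecs_supp by metis
    have "wtF F v \<le> 1" using wt_le1_sub[OF fin vs _ v(2)] FAB by simp
    hence w1: "wtF F (T v) \<le> 1" using I(4)[OF v(1)] by simp
    have Tv: "T v \<in> vecs n" using I(3)[OF v(1)] .
    have Tvs: "supp (T v) \<subseteq> \<Union>F" using Tv cov vecs_supp by metis
    have "T v = 0 \<or> (\<exists>C\<in>F. supp (T v) \<subseteq> C)" using wt_le1_iff[OF fin Tvs] w1 by blast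
    thus ?thesis using Tv FAB unfolding VA_def VB_def by auto
  qed
  have sub: "T ` VA \<subseteq> VA \<or> T ` VA \<subseteq> VB"
  proof (rule ccontr)
    assume "\<not> ?thesis"
    then obtain u v where u: "u \<in> VA" "T u \<notin> VA" and v: "v \<in> VA" "T v \<notin> VB" by auto
    have Tu: "T u \<in> VB" using into[OF u(1)] u(2) by auto
    have Tv: "T v \<in> VA" using into[OF v(1)] v(2) by auto
    have uv: "u + v \<in> VA" using u(1) v(1) supp_add_sub[of u v] unfolding VA_def by (auto simp: vecs_add)
    have T_uv: "T (u + v) = T u + T v" using add u(1) v(1) unfolding VA_def by auto
    show False
    proof (cases "T (u + v) \<in> VA")
      case True
      have "T u = T (u + v) - T v" using T_uv by simp
      hence "T u \<in> VA" using diffA[OF True Tv] by simp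
      thus False using u(2) by simp
    next
      case False
      hence "T (u + v) \<in> VB" using into[OF uv] by simp
      moreover have "T v = T (u + v) - T u" using T_uv by simp
      ultimately have "T v \<in> VB" using diffB Tu by metis
      thus False using v(2) by simp
    qed
  qed
  have injA: "inj_on T VA" using inj_on_subset[OF I(5)] unfolding VA_def by auto
  show False
  proof (cases "T ` VA \<subseteq> VB")
    case True
    have "card VA \<le> card VB" using card_inj_on_le[OF injA True finVB] .
    moreover have "card (UNIV :: 'f set) ^ card B < card (UNIV :: 'f set) ^ card A"
      using cAB card_field_ge2[where 'f='f] by (intro power_strict_increasing) auto
    ultimately show False using cVA cVB by simp
  next
    case False
    hence sA: "T ` VA \<subseteq> VA" using sub by blast
    have "{i} \<subseteq> {1..n}" using i AU by auto
    hence "ind {i} \<in> VA" unfolding VA_def using i by (auto intro: ind_vecs)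
    hence "ind {j} \<in> VA" using sA Tij by force
    hence "j \<in> A" unfolding VA_def by simp
    thus False using j AB by auto
  qed
qed


lemma nrD: "no_redundant F \<Longrightarrow> A \<in> F \<Longrightarrow> B \<in> F \<Longrightarrow> A \<subset> B \<Longrightarrow> False"
  unfolding no_redundant_def by auto

lemma no_empty:
  assumes "n \<ge> 1" "is_covering n F" "no_redundant F"
  shows "{} \<notin> F"
proof
  assume e: "{} \<in> F"
  have "1 \<in> \<Union>F" using assms(1,2) unfolding is_covering_def by auto
  then obtain A where "A \<in> F" "1 \<in> A" by auto
  hence "{} \<subset> A" by auto
  thus False using nrD[OF assms(3) e \<open>A \<in> F\<close>] by simp
qed

lemma wt_eq1:
  assumes "finite F" "supp v \<subseteq> \<Union>F" "D \<in> F" "supp v \<subseteq> D" "v \<noteq> 0"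
  shows "wtF F v = 1"
proof -
  have "wtF F v \<le> 1" by (rule wt_le1_sub[OF assms(1-4)])
  moreover have "wtF F v \<noteq> 0" using wt_le0_iff[OF assms(1,2)] assms(5) by simp
  ultimately show ?thesis by simp
qed

lemma forward:
  assumes n1: "n \<ge> 1" and covg: "is_covering n F" and nr: "no_redundant F"
    and c2: "card (components F) = 2" and mep: "MEP TYPE('f::{finite,field}) n F"
  shows "\<exists>k. k_partition n F k"
proof -
  have fin: "finite F" using covering_finite[OF covg] .
  have cov: "\<Union>F = {1..n}" using covg unfolding is_covering_def by simp
  have ne: "{} \<notin> F" using no_empty[OF n1 covg nr] .
  have Fne: "F \<noteq> {}" using cov n1 by auto
  have vs: "supp v \<subseteq> \<Union>F" if "v \<in> vecs n" for v :: "nat \<Rightarrow> 'f"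
    using that cov vecs_supp by metis
  show ?thesis
  proof (cases "\<exists>A\<in>F. \<exists>A'\<in>F. A \<noteq> A' \<and> A \<inter> A' \<noteq> {}")
    case True
    then obtain A A' where A: "A \<in> F" and A': "A' \<in> F" and AA: "A \<noteq> A'" and int: "A \<inter> A' \<noteq> {}"
      by auto
    obtain i where iA: "i \<in> A" "i \<in> A'" using int by auto
    obtain Sa where Sa: "Sa \<in> components F" "A \<in> Sa" using in_some_component[OF fin A ne] by auto
    obtain S1 S2 where S12: "components F = {S1, S2}" "S1 \<noteq> S2" using c2 unfolding card_2_iff by auto
    obtain Sb where Sb: "Sb \<in> components F" "Sb \<noteq> Sa"
    proof (cases "S1 = Sa")
      case True
      thus ?thesis using that[of S2] S12 by auto
    next
      case False
      thus ?thesis using that[of S1] S12 by auto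
    qed
    obtain B where B: "B \<in> Sb" using component_nonempty[OF Sb(1) Fne ne] by auto
    have BF: "B \<in> F" using Sb(1) B unfolding components_def by auto
    obtain j where j: "j \<in> B" using BF ne by (metis all_not_in_conv)
    have P2: "\<forall>D\<in>F. \<forall>E\<in>F. i \<in> D \<longrightarrow> j \<in> E \<longrightarrow> D \<inter> E = {}"
    proof (intro ballI impI, rule ccontr)
      fix D E assume DE: "D \<in> F" "E \<in> F" "i \<in> D" "j \<in> E" "D \<inter> E \<noteq> {}"
      obtain SD where SD: "SD \<in> components F" "D \<in> SD" using in_some_component[OF fin DE(1) ne] by auto
      obtain SE where SE: "SE \<in> components F" "E \<in> SE" using in_some_component[OF fin DE(2) ne] by auto
      have "D \<inter> A \<noteq> {}" using DE(3) iA by auto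
      hence "SD = Sa" using comp_inter_eq[OF SD(1) Sa(1) SD(2) Sa(2) _ ne] by simp
      have "E \<inter> B \<noteq> {}" using DE(4) j by auto
      hence "SE = Sb" using comp_inter_eq[OF SE(1) Sb(1) SE(2) B _ ne] by simp
      have "Sa = Sb" using comp_inter_eq[OF Sa(1) Sb(1) _ _ DE(5) ne] SD SE \<open>SD = Sa\<close> \<open>SE = Sb\<close> by simp
      thus False using Sb(2) by simp
    qed
    have jF: "j \<in> \<Union>F" using BF j by auto
    have iF: "i \<in> \<Union>F" using A iA by auto
    have AU: "A \<union> A' \<subseteq> {1..n}" using A A' cov by auto
    define x :: "nat \<Rightarrow> 'f" where "x = ind (A \<union> A')"
    define y :: "nat \<Rightarrow> 'f" where "y = ind {i, j}"
    have xv: "x \<in> vecs n" unfolding x_def by (rule ind_vecs[OF AU])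
    have yv: "y \<in> vecs n" unfolding y_def using iF jF cov by (intro ind_vecs) auto
    have nsub: "\<not> A \<subseteq> A'" "\<not> A' \<subseteq> A" using nr A A' AA unfolding no_redundant_def by auto
    have wx: "wtF F x = 2"
    proof (rule wt_eq2[OF fin vs[OF xv] A A'])
      show "supp x \<subseteq> A \<union> A'" unfolding x_def by simp
      show "x \<noteq> 0" unfolding x_def using iA by (auto simp: fun_eq_iff ind_def)
      fix C assume C: "C \<in> F"
      show "\<not> supp x \<subseteq> C"
      proof
        assume "supp x \<subseteq> C"
        hence s: "A \<subseteq> C" "A' \<subseteq> C" unfolding x_def by auto
        show False
        proof (cases "A = C")
          case True thus False using s nsub by simp
        next
          case False
          hence "A \<subset> C" using s by auto
          thus False using nrD[OF nr A C] by simp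
        qed
      qed
    qed
    obtain D0 where D0: "D0 \<in> F" "i \<in> D0" using iF by auto
    obtain E0 where E0: "E0 \<in> F" "j \<in> E0" using jF by auto
    have wy: "wtF F y = 2"
    proof (rule wt_eq2[OF fin vs[OF yv] D0(1) E0(1)])
      show "supp y \<subseteq> D0 \<union> E0" unfolding y_def using D0 E0 by auto
      show "y \<noteq> 0" unfolding y_def by (auto simp: fun_eq_iff ind_def)
      fix C assume C: "C \<in> F"
      show "\<not> supp y \<subseteq> C"
      proof
        assume "supp y \<subseteq> C"
        hence "i \<in> C" "j \<in> C" unfolding y_def by auto
        thus False using P2 C by auto
      qed
    qed
    have x1: "x i = 1" unfolding x_def ind_def using iA by simp
    obtain T where T: "linear_isometry n F T" "T x = y"
      using MEP_1dim[OF mep xv yv x1] wx wy by auto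
    have False using case_b_false[OF fin cov nr A A' AA iA P2 jF T(1)] T(2) x_def y_def by simp
    thus ?thesis ..
  next
    case False
    hence pd: "\<forall>A\<in>F. \<forall>B\<in>F. A \<noteq> B \<longrightarrow> A \<inter> B = {}" by auto
    obtain A B where AB: "F = {A, B}" "A \<noteq> B" "A \<inter> B = {}" using disjoint_two[OF fin ne pd c2] by auto
    have AneB: "A \<noteq> {}" "B \<noteq> {}" using ne AB by auto
    have gen: "False" if lt: "card Y < card X" and XY: "F = {X, Y}" "X \<inter> Y = {}" "X \<noteq> {}" "Y \<noteq> {}"
      for X Y
    proof -
      obtain i where i: "i \<in> X" using XY(3) by (meson all_not_in_conv)
      obtain j where j: "j \<in> Y" using XY(4) by (meson all_not_in_conv)
      have XYU: "X \<subseteq> {1..n}" "Y \<subseteq> {1..n}" using cov XY(1) by auto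
      have XU: "{i} \<subseteq> {1..n}" "{j} \<subseteq> {1..n}" using i j XYU by auto
      define x :: "nat \<Rightarrow> 'f" where "x = ind {i}"
      define y :: "nat \<Rightarrow> 'f" where "y = ind {j}"
      have xv: "x \<in> vecs n" unfolding x_def by (rule ind_vecs[OF XU(1)])
      have yv: "y \<in> vecs n" unfolding y_def by (rule ind_vecs[OF XU(2)])
      have XF: "X \<in> F" "Y \<in> F" using XY(1) by auto
      have x0: "x \<noteq> 0" "y \<noteq> 0"
      proof -
        have "x i = 1" "y j = 1" unfolding x_def y_def ind_def by simp_all
        thus "x \<noteq> 0" "y \<noteq> 0" by auto
      qed
      have sx: "supp x \<subseteq> X" "supp y \<subseteq> Y" unfolding x_def y_def using i j by auto
      have wx: "wtF F x = 1" by (rule wt_eq1[OF fin vs[OF xv] XF(1) sx(1) x0(1)])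
      have wy: "wtF F y = 1" by (rule wt_eq1[OF fin vs[OF yv] XF(2) sx(2) x0(2)])
      have x1: "x i = 1" unfolding x_def ind_def by simp
      obtain T where T: "linear_isometry n F T" "T x = y"
        using MEP_1dim[OF mep xv yv x1] wx wy by auto
      show False using case_a_false[OF fin cov XY(1,2) lt T(1) i j] T(2) x_def y_def by simp
    qed
    have "card A = card B"
    proof (rule ccontr)
      assume "card A \<noteq> card B"
      hence "card B < card A \<or> card A < card B" by auto
      thus False
      proof
        assume "card B < card A" thus False using gen[of B A] AB(1,3) AneB by simp
      next
        assume "card A < card B"
        moreover have "F = {B, A}" using AB by auto
        moreover have "B \<inter> A = {}" using AB(3) by auto
        ultimately show False using gen[of A B] AneB by simp
      qed
    qed
    hence "k_partition n F (card A)"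
      unfolding k_partition_def using cov AB AneB by (simp add: Int_commute)
    thus ?thesis by auto
  qed
qed


lemma vs_smult: "vector_space (smult_vec :: 'f::field \<Rightarrow> (nat \<Rightarrow> 'f) \<Rightarrow> (nat \<Rightarrow> 'f))"
  by unfold_locales (simp_all add: smult_vec_def fun_eq_iff algebra_simps)

lemma vsp_smult: "vector_space_pair (smult_vec :: 'f::field \<Rightarrow> (nat \<Rightarrow> 'f) \<Rightarrow> (nat \<Rightarrow> 'f)) smult_vec"
  unfolding vector_space_pair_def using vs_smult by blast

definition VV :: "nat set \<Rightarrow> (nat \<Rightarrow> 'f::zero) set" where
  "VV X = {v. supp v \<subseteq> X}"

lemma sum_fun_apply: "(sum f A) x = sum (\<lambda>a. f a x) A"
  by (induct A rule: infinite_finite_induct) auto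

lemma VV_facts:
  fixes X :: "nat set"
  assumes fX: "finite X"
  shows "module.subspace (smult_vec :: 'f::field \<Rightarrow> _ \<Rightarrow> _) (VV X :: (nat \<Rightarrow> 'f) set)"
    and "module.independent (smult_vec :: 'f::field \<Rightarrow> _ \<Rightarrow> _) ((\<lambda>a. ind {a} :: nat \<Rightarrow> 'f) ` X)"
    and "module.span (smult_vec :: 'f::field \<Rightarrow> _ \<Rightarrow> _) ((\<lambda>a. ind {a} :: nat \<Rightarrow> 'f) ` X) = VV X"
    and "card ((\<lambda>a. ind {a} :: nat \<Rightarrow> 'f) ` X) = card X"
    and "vector_space.dim (smult_vec :: 'f::field \<Rightarrow> _ \<Rightarrow> _) (VV X :: (nat \<Rightarrow> 'f) set) = card X"
proof -
  interpret vs: vector_space "smult_vec :: 'f \<Rightarrow> (nat \<Rightarrow> 'f) \<Rightarrow> (nat \<Rightarrow> 'f)" by (rule vs_smult)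
  let ?e = "\<lambda>a. ind {a} :: nat \<Rightarrow> 'f"
  have einj: "inj ?e" by (rule injI) (metis ind_inj singleton_inject)
  show sub: "vs.subspace (VV X :: (nat \<Rightarrow> 'f) set)"
  proof (rule vs.subspaceI)
    show "0 \<in> VV X" by (simp add: VV_def)
    show "x + y \<in> VV X" if "x \<in> VV X" "y \<in> VV X" for x y :: "nat \<Rightarrow> 'f"
      using that supp_add_sub[of x y] by (auto simp: VV_def)
    show "smult_vec c x \<in> VV X" if "x \<in> VV X" for c and x :: "nat \<Rightarrow> 'f"
      using that by (auto simp: VV_def supp_def)
  qed
  show ind: "vs.independent (?e ` X)"
  proof (rule vs.independent_if_scalars_zero)
    show "finite (?e ` X)" using fX by simp
    fix f x assume s: "(\<Sum>x\<in>?e ` X. smult_vec (f x) x) = 0" and x: "x \<in> ?e ` X"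
    then obtain a where a: "a \<in> X" "x = ?e a" by auto
    have "0 = (\<Sum>x\<in>?e ` X. smult_vec (f x) x) a" using s by simp
    also have "\<dots> = (\<Sum>y\<in>?e ` X. f y * y a)" by (simp add: sum_fun_apply)
    also have "\<dots> = (\<Sum>b\<in>X. f (?e b) * ?e b a)"
      by (rule sum.reindex[unfolded comp_def, OF inj_on_subset[OF einj subset_UNIV]])
    also have "\<dots> = (\<Sum>b\<in>X. if b = a then f (?e a) else 0)"
      by (rule sum.cong) (auto simp: ind_def)
    also have "\<dots> = f (?e a)" using a(1) fX by simp
    finally show "f x = 0" using a by simp
  qed
  show sp: "vs.span (?e ` X) = VV X"
  proof (rule vs.span_subspace[OF _ _ sub])
    show "?e ` X \<subseteq> VV X" by (auto simp: VV_def)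
    show "VV X \<subseteq> vs.span (?e ` X)"
    proof
      fix v :: "nat \<Rightarrow> 'f" assume v: "v \<in> VV X"
      have "v = (\<Sum>a\<in>X. smult_vec (v a) (?e a))"
      proof
        fix m
        have "(\<Sum>a\<in>X. smult_vec (v a) (?e a)) m = (\<Sum>a\<in>X. if a = m then v m else 0)"
          by (simp add: sum_fun_apply ind_def) (rule sum.cong, auto)
        also have "\<dots> = v m" using v fX by (auto simp: VV_def supp_def)
        finally show "v m = (\<Sum>a\<in>X. smult_vec (v a) (?e a)) m" by simp
      qed
      also have "\<dots> \<in> vs.span (?e ` X)"
        by (intro vs.span_sum vs.span_scale vs.span_base) auto
      finally show "v \<in> vs.span (?e ` X)" .
    qed
  qed
  show cd: "card (?e ` X) = card X" using card_image[OF inj_on_subset[OF einj subset_UNIV]] .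
  show "vs.dim (VV X :: (nat \<Rightarrow> 'f) set) = card X"
  proof -
    have "vs.span (VV X :: (nat \<Rightarrow> 'f) set) = VV X" using vs.span_eq_iff sub by blast
    hence "vs.span (?e ` X) = vs.span (VV X :: (nat \<Rightarrow> 'f) set)" using sp by (simp only:)
    thus ?thesis using vs.dim_eq_card[OF _ ind] cd by simp
  qed
qed


lemma linear_on_0:
  assumes "linear_on P g" "0 \<in> P"
  shows "g 0 = (0 :: nat \<Rightarrow> 'f::field)"
proof -
  have "g (smult_vec 0 0) = smult_vec 0 (g 0)" using assms unfolding linear_on_def by blast
  moreover have "smult_vec (0::'f) (0::nat\<Rightarrow>'f) = 0" by (simp add: fun_eq_iff)
  moreover have "smult_vec (0::'f) (g 0) = 0" by (simp add: fun_eq_iff)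
  ultimately show ?thesis by simp
qed

lemma agree_on:
  fixes h g :: "(nat \<Rightarrow> 'f::field) \<Rightarrow> (nat \<Rightarrow> 'f)"
  assumes hl: "Vector_Spaces.linear smult_vec smult_vec h" and Ps: "module.subspace smult_vec P"
    and gl: "linear_on P g" and BP: "B \<subseteq> P" "P \<subseteq> module.span smult_vec B"
    and eq: "\<forall>b\<in>B. h b = g b"
  shows "\<forall>x\<in>P. h x = g x"
proof -
  interpret vs: vector_space "smult_vec :: 'f \<Rightarrow> (nat \<Rightarrow> 'f) \<Rightarrow> (nat \<Rightarrow> 'f)" by (rule vs_smult)
  interpret vp: vector_space_pair "smult_vec :: 'f \<Rightarrow> (nat \<Rightarrow> 'f) \<Rightarrow> (nat \<Rightarrow> 'f)" smult_vec by (rule vsp_smult)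
  define Q where "Q = {x \<in> P. h x = g x}"
  have P0: "0 \<in> P" using Ps vs.subspace_0 by blast
  have "vs.subspace Q"
  proof (rule vs.subspaceI)
    show "0 \<in> Q" unfolding Q_def using P0 vp.linear_0[OF hl] linear_on_0[OF gl P0] by simp
    show "x + y \<in> Q" if "x \<in> Q" "y \<in> Q" for x y
    proof -
      have "x + y \<in> P" using that Ps vs.subspace_add unfolding Q_def by blast
      moreover have "g (x + y) = g x + g y" using gl that unfolding linear_on_def Q_def by blast
      moreover have "h (x + y) = h x + h y" using vp.linear_add[OF hl] .
      ultimately show ?thesis using that unfolding Q_def by simp
    qed
    show "smult_vec c x \<in> Q" if "x \<in> Q" for c x
    proof -
      have "smult_vec c x \<in> P" using that Ps vs.subspace_scale unfolding Q_def by blast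
      moreover have "g (smult_vec c x) = smult_vec c (g x)" using gl that unfolding linear_on_def Q_def by blast
      moreover have "h (smult_vec c x) = smult_vec c (h x)" using vp.linear_scale[OF hl] .
      ultimately show ?thesis using that unfolding Q_def by simp
    qed
  qed
  moreover have "B \<subseteq> Q" using BP eq unfolding Q_def by auto
  ultimately have "vs.span B \<subseteq> Q" using vs.span_minimal by blast
  thus ?thesis using BP unfolding Q_def by auto
qed


lemma ext_inj:
  fixes g :: "(nat \<Rightarrow> 'f::field) \<Rightarrow> (nat \<Rightarrow> 'f)" and P :: "(nat \<Rightarrow> 'f) set"
  assumes fX: "finite X" and fY: "finite Y" and cXY: "card X = card Y"
    and PX: "P \<subseteq> VV X" and Ps: "module.subspace smult_vec P"
    and gl: "linear_on P g" and gP: "g ` P \<subseteq> VV Y" and ker: "\<forall>p\<in>P. g p = 0 \<longrightarrow> p = 0"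
  shows "\<exists>h. Vector_Spaces.linear smult_vec smult_vec h \<and> (\<forall>p\<in>P. h p = g p) \<and>
      h ` VV X \<subseteq> VV Y \<and> (\<forall>v\<in>VV X. h v = 0 \<longrightarrow> v = 0)"
proof -
  interpret vs: vector_space "smult_vec :: 'f \<Rightarrow> (nat \<Rightarrow> 'f) \<Rightarrow> (nat \<Rightarrow> 'f)" by (rule vs_smult)
  interpret vp: vector_space_pair "smult_vec :: 'f \<Rightarrow> (nat \<Rightarrow> 'f) \<Rightarrow> (nat \<Rightarrow> 'f)" smult_vec by (rule vsp_smult)
  let ?e = "\<lambda>a. ind {a} :: nat \<Rightarrow> 'f"
  note VX = VV_facts[OF fX, where 'f='f]
  note VY = VV_facts[OF fY, where 'f='f]
  obtain BP where BP: "BP \<subseteq> P" "vs.independent BP" "P \<subseteq> vs.span BP"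
    using vs.maximal_independent_subset by blast
  have finBP: "finite BP"
    using vs.independent_span_bound[of "?e ` X" BP] fX BP PX VX(3) by auto
  define h0 where "h0 = vp.construct BP g"
  have h0l: "Vector_Spaces.linear smult_vec smult_vec h0" unfolding h0_def by (rule vp.linear_construct[OF BP(2)])
  have h0g: "\<forall>x\<in>P. h0 x = g x"
    by (rule agree_on[OF h0l Ps gl BP(1,3)]) (simp add: h0_def vp.construct_basis[OF BP(2)])
  have spBP: "vs.span BP = P" by (rule vs.span_subspace[OF BP(1,3) Ps])
  have injh0: "inj_on h0 P"
    using vp.linear_inj_on_iff_eq_0[OF h0l Ps] h0g ker by simp
  define GBP where "GBP = g ` BP"
  have GBP_eq: "GBP = h0 ` BP" using h0g BP(1) unfolding GBP_def by force
  have indG: "vs.independent GBP"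
    unfolding GBP_eq using vp.linear_independent_injective_image[OF h0l BP(2)] injh0 spBP by simp
  have injg: "inj_on g BP"
  proof (rule inj_onI)
    fix a b assume "a \<in> BP" "b \<in> BP" "g a = g b"
    have "a \<in> P" "b \<in> P" using \<open>a \<in> BP\<close> \<open>b \<in> BP\<close> BP(1) by auto
    hence "h0 a = g a" "h0 b = g b" using h0g by auto
    hence "h0 a = h0 b" using \<open>g a = g b\<close> by simp
    thus "a = b" using injh0 \<open>a \<in> BP\<close> \<open>b \<in> BP\<close> BP(1) unfolding inj_on_def by blast
  qed
  have cG: "card GBP = card BP" unfolding GBP_def using card_image[OF injg] .
  have GY: "GBP \<subseteq> VV Y" using gP BP(1) unfolding GBP_def by auto
  have BPX: "BP \<subseteq> VV X" using BP(1) PX by auto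
  obtain BX where BX: "BP \<subseteq> BX" "BX \<subseteq> VV X" "vs.independent BX" "VV X \<subseteq> vs.span BX"
    using vs.maximal_independent_subset_extend[OF BPX BP(2)] by blast
  obtain CY where CY: "GBP \<subseteq> CY" "CY \<subseteq> VV Y" "vs.independent CY" "VV Y \<subseteq> vs.span CY"
    using vs.maximal_independent_subset_extend[OF GY indG] by blast
  have finBX: "finite BX"
    using vs.independent_span_bound[of "?e ` X" BX] fX BX VX(3) by auto
  have finCY: "finite CY"
    using vs.independent_span_bound[of "?e ` Y" CY] fY CY VY(3) by auto
  have cBX: "card BX = card X" using vs.basis_card_eq_dim[OF BX(2,4,3)] VX(5) by simp
  have cCY: "card CY = card Y" using vs.basis_card_eq_dim[OF CY(2,4,3)] VY(5) by simp
  have "card (BX - BP) = card (CY - GBP)"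
    using card_Diff_subset[OF finBP BX(1)] card_Diff_subset[OF finite_subset[OF CY(1) finCY] CY(1)]
      cBX cCY cXY cG by simp
  then obtain \<phi> where phi: "bij_betw \<phi> (BX - BP) (CY - GBP)"
    using finite_same_card_bij[of "BX - BP" "CY - GBP"] finBX finCY by auto
  define f where "f = (\<lambda>b. if b \<in> BP then g b else \<phi> b)"
  define h where "h = vp.construct BX f"
  have hl: "Vector_Spaces.linear smult_vec smult_vec h" unfolding h_def by (rule vp.linear_construct[OF BX(3)])
  have hf: "h b = f b" if "b \<in> BX" for b unfolding h_def by (rule vp.construct_basis[OF BX(3) that])
  have hg: "\<forall>p\<in>P. h p = g p"
    by (rule agree_on[OF hl Ps gl BP(1,3)]) (use hf BX(1) in \<open>auto simp: f_def\<close>)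
  have hBX: "h ` BX = CY"
  proof -
    have "h ` BX = f ` BX" using hf by (auto simp: image_iff)
    also have "f ` BX = g ` BP \<union> \<phi> ` (BX - BP)"
      using BX(1) unfolding f_def by (auto simp: image_iff)
    also have "\<phi> ` (BX - BP) = CY - GBP" using phi unfolding bij_betw_def by (elim conjE)
    finally have "h ` BX = GBP \<union> (CY - GBP)" unfolding GBP_def .
    thus ?thesis using CY(1) by auto
  qed
  have injf: "inj_on h BX"
  proof (rule inj_onI)
    fix a b assume ab: "a \<in> BX" "b \<in> BX" "h a = h b"
    hence fab: "f a = f b" using hf by simp
    have phiin: "\<phi> c \<in> CY - GBP" if "c \<in> BX - BP" for c using phi that unfolding bij_betw_def by auto
    show "a = b"
    proof (cases "a \<in> BP")
      case True
      show ?thesis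
      proof (cases "b \<in> BP")
        case True
        thus ?thesis using \<open>a \<in> BP\<close> fab injg unfolding f_def inj_on_def by auto
      next
        case False
        hence "\<phi> b \<in> CY - GBP" using phiin ab(2) by simp
        moreover have "f b = \<phi> b" "f a = g a" using False \<open>a \<in> BP\<close> unfolding f_def by auto
        moreover have "g a \<in> GBP" using \<open>a \<in> BP\<close> unfolding GBP_def by auto
        ultimately show ?thesis using fab by auto
      qed
    next
      case False
      show ?thesis
      proof (cases "b \<in> BP")
        case True
        hence "\<phi> a \<in> CY - GBP" using phiin ab(1) False by simp
        moreover have "f a = \<phi> a" "f b = g b" using False \<open>b \<in> BP\<close> unfolding f_def by auto
        moreover have "g b \<in> GBP" using \<open>b \<in> BP\<close> unfolding GBP_def by auto
        ultimately show ?thesis using fab by auto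
      next
        case bF: False
        have "\<phi> a = \<phi> b" using fab False bF unfolding f_def by simp
        thus ?thesis using phi ab(1,2) False bF unfolding bij_betw_def inj_on_def by auto
      qed
    qed
  qed
  have injspan: "inj_on h (vs.span BX)"
    using vp.linear_inj_on_span_iff_independent_image[OF hl] hBX CY(3) injf by simp
  have img: "h ` VV X \<subseteq> VV Y"
  proof -
    have "h ` VV X \<subseteq> h ` vs.span BX" using BX(4) by auto
    also have "\<dots> = vs.span (h ` BX)" using vp.linear_span_image[OF hl] by simp
    also have "\<dots> = vs.span CY" using hBX by simp
    also have "\<dots> \<subseteq> VV Y" using vs.span_minimal[OF CY(2) VY(1)] .
    finally show ?thesis .
  qed
  have kerh: "\<forall>v\<in>VV X. h v = 0 \<longrightarrow> v = 0"
  proof (intro ballI impI)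
    fix v assume v: "v \<in> VV X" "h v = 0"
    have "h 0 = 0" using vp.linear_0[OF hl] .
    moreover have "0 \<in> vs.span BX" by (rule vs.span_zero)
    moreover have "v \<in> vs.span BX" using v(1) BX(4) by auto
    ultimately show "v = 0" using injspan v(2) \<open>v \<in> vs.span BX\<close> unfolding inj_on_def by simp
  qed
  show ?thesis by (rule exI[of _ h]) (use hl hg img kerh in simp)
qed


definition pr :: "nat set \<Rightarrow> (nat \<Rightarrow> 'f::zero) \<Rightarrow> (nat \<Rightarrow> 'f)" where
  "pr X v = (\<lambda>m. if m \<in> X then v m else 0)"

lemma pr_add: "pr X (u + v) = pr X u + pr X (v :: nat \<Rightarrow> 'f::monoid_add)"
  by (simp add: pr_def fun_eq_iff)
lemma pr_diff: "pr X (u - v) = pr X u - pr X (v :: nat \<Rightarrow> 'f::group_add)"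
  by (simp add: pr_def fun_eq_iff)
lemma pr_smult: "pr X (smult_vec c v) = smult_vec c (pr X (v :: nat \<Rightarrow> 'f::field))"
  by (simp add: pr_def fun_eq_iff)
lemma pr_zero_iff: "pr X v = 0 \<longleftrightarrow> supp v \<inter> X = {}"
  by (auto simp: pr_def fun_eq_iff supp_def)
lemma pr_nz: "pr X v \<noteq> 0 \<Longrightarrow> v \<noteq> (0 :: nat \<Rightarrow> 'f::zero)"
  by (auto simp: pr_zero_iff)
lemma supp_pr: "supp (pr X v) \<subseteq> X"
  by (auto simp: pr_def supp_def)
lemma pr_VV: "pr X v \<in> VV X"
  by (simp add: VV_def supp_pr)
lemma pr_id: "supp v \<subseteq> X \<Longrightarrow> pr X v = v"
  by (auto simp: pr_def fun_eq_iff supp_def)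
lemma pr_other: "supp v \<subseteq> Y \<Longrightarrow> X \<inter> Y = {} \<Longrightarrow> pr X v = 0"
  by (auto simp: pr_def fun_eq_iff supp_def)

lemma wt_formula:
  fixes v :: "nat \<Rightarrow> 'f::field"
  assumes AB: "A \<inter> B = {}" and cov: "A \<union> B = {1..n}" and v: "v \<in> vecs n"
  shows "wtF {A, B} v = (if pr A v = 0 then 0 else 1) + (if pr B v = 0 then 0 else 1)"
proof -
  have fin: "finite {A, B}" by simp
  have vs: "supp v \<subseteq> \<Union>{A, B}" using v cov vecs_supp by auto
  show ?thesis
  proof (cases "pr A v = 0")
    case pA: True
    show ?thesis
    proof (cases "pr B v = 0")
      case True
      hence "supp v = {}" using pA vs pr_zero_iff by auto
      hence "v = 0" using supp_empty_iff by auto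
      thus ?thesis using pA True by simp
    next
      case False
      have "supp v \<subseteq> B" using pA vs pr_zero_iff by auto
      moreover have "v \<noteq> 0" using False pr_nz by blast
      ultimately have "wtF {A, B} v = 1" using wt_eq1[OF fin vs, of B] by simp
      thus ?thesis using pA False by simp
    qed
  next
    case pA: False
    show ?thesis
    proof (cases "pr B v = 0")
      case True
      have "supp v \<subseteq> A" using True vs pr_zero_iff by auto
      moreover have "v \<noteq> 0" using pA pr_nz by blast
      ultimately have "wtF {A, B} v = 1" using wt_eq1[OF fin vs, of A] by simp
      thus ?thesis using pA True by simp
    next
      case False
      have iA: "supp v \<inter> A \<noteq> {}" "supp v \<inter> B \<noteq> {}" using pA False pr_zero_iff by auto
      have "wtF {A, B} v = 2"
      proof (rule wt_eq2[OF fin vs, of A B])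
        show "supp v \<subseteq> A \<union> B" using vs by simp
        show "v \<noteq> 0" using pA pr_nz by blast
        fix C assume "C \<in> {A, B}"
        thus "\<not> supp v \<subseteq> C" using iA AB by auto
      qed simp_all
      thus ?thesis using pA False by simp
    qed
  qed
qed


locale mepset =
  fixes n :: nat and A B :: "nat set" and C1 C2 :: "(nat \<Rightarrow> 'f::field) set"
    and t :: "(nat \<Rightarrow> 'f) \<Rightarrow> (nat \<Rightarrow> 'f)"
  assumes AB: "A \<inter> B = {}" and cov: "A \<union> B = {1..n}" and Ane: "A \<noteq> {}" and Bne: "B \<noteq> {}"
    and code1: "linear_code n C1" and code2: "linear_code n C2" and leq: "local_equiv {A, B} C1 C2 t"
begin

lemma C1v: "x \<in> C1 \<Longrightarrow> x \<in> vecs n"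
  using code1 unfolding linear_code_def by auto
lemma C1add: "x \<in> C1 \<Longrightarrow> y \<in> C1 \<Longrightarrow> x + y \<in> C1"
  using code1 unfolding linear_code_def by auto
lemma C1sm: "x \<in> C1 \<Longrightarrow> smult_vec c x \<in> C1"
  using code1 unfolding linear_code_def by auto
lemma C10: "0 \<in> C1"
  using code1 unfolding linear_code_def by auto
lemma tadd: "x \<in> C1 \<Longrightarrow> y \<in> C1 \<Longrightarrow> t (x + y) = t x + t y"
  using leq unfolding local_equiv_def linear_on_def by auto
lemma tsm: "x \<in> C1 \<Longrightarrow> t (smult_vec c x) = smult_vec c (t x)"
  using leq unfolding local_equiv_def linear_on_def by auto
lemma tv: "x \<in> C1 \<Longrightarrow> t x \<in> vecs n"
  using leq code2 unfolding local_equiv_def linear_code_def by auto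
lemma twt: "x \<in> C1 \<Longrightarrow> wtF {A, B} (t x) = wtF {A, B} x"
  using leq unfolding local_equiv_def by auto

lemma minus_eq: "x - y = x + smult_vec (-1) (y :: nat \<Rightarrow> 'f)"
  by (simp add: fun_eq_iff)

lemma C1diff: "x \<in> C1 \<Longrightarrow> y \<in> C1 \<Longrightarrow> x - y \<in> C1"
  unfolding minus_eq by (intro C1add C1sm)

lemma tdiff: "x \<in> C1 \<Longrightarrow> y \<in> C1 \<Longrightarrow> t (x - y) = t x - t y"
proof -
  assume xy: "x \<in> C1" "y \<in> C1"
  have "t (x - y) = t x + smult_vec (-1) (t y)" unfolding minus_eq
    using tadd[OF xy(1) C1sm[OF xy(2)]] tsm[OF xy(2)] by simp
  thus ?thesis by (simp add: minus_eq)
qed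

lemma t0: "t 0 = 0"
proof -
  have "t (smult_vec 0 0) = smult_vec 0 (t 0)" using tsm[OF C10] .
  moreover have "smult_vec (0::'f) (0::nat\<Rightarrow>'f) = 0" by (simp add: fun_eq_iff)
  moreover have "smult_vec (0::'f) (t 0) = 0" by (simp add: fun_eq_iff)
  ultimately show ?thesis by simp
qed

lemma vsF: "v \<in> vecs n \<Longrightarrow> supp v \<subseteq> \<Union>{A, B}"
  using cov vecs_supp by auto

lemma tzero: "x \<in> C1 \<Longrightarrow> t x = 0 \<Longrightarrow> x = 0"
proof -
  assume x: "x \<in> C1" "t x = 0"
  have "wtF {A, B} x = 0" using twt[OF x(1)] x(2) by simp
  thus "x = 0" using wt_le0_iff[of "{A, B}" x] vsF[OF C1v[OF x(1)]] by simp
qed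

lemma le1: "v \<in> vecs n \<Longrightarrow> wtF {A, B} v \<le> 1 \<longleftrightarrow> supp v \<subseteq> A \<or> supp v \<subseteq> B"
proof -
  assume v: "v \<in> vecs n"
  have "wtF {A, B} v \<le> 1 \<longleftrightarrow> v = 0 \<or> (\<exists>C\<in>{A, B}. supp v \<subseteq> C)"
    by (rule wt_le1_iff[OF _ vsF[OF v]]) simp
  also have "\<dots> \<longleftrightarrow> supp v \<subseteq> A \<or> supp v \<subseteq> B" using supp_empty_iff[of v] by auto
  finally show ?thesis .
qed

lemma two_cases: "X \<in> {A, B} \<Longrightarrow> Y \<in> {A, B} \<Longrightarrow> X \<noteq> Y \<Longrightarrow> (X = A \<and> Y = B) \<or> (X = B \<and> Y = A)"
  by auto

lemma mixed:
  assumes u: "u \<in> vecs n" and v: "v \<in> vecs n" and X: "X \<in> {A, B}" and Y: "Y \<in> {A, B}" and XY: "X \<noteq> Y"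
    and su: "supp u \<subseteq> X" and sv: "supp v \<subseteq> Y" and u0: "u \<noteq> 0" and v0: "v \<noteq> 0"
  shows "\<not> wtF {A, B} (u + v) \<le> 1"
proof
  assume "wtF {A, B} (u + v) \<le> 1"
  hence s: "supp (u + v) \<subseteq> A \<or> supp (u + v) \<subseteq> B" using le1 vecs_add[OF u v] by blast
  have dis: "X \<inter> Y = {}" using two_cases[OF X Y XY] AB by auto
  obtain a where a: "u a \<noteq> 0" using u0 by (auto simp: fun_eq_iff)
  obtain b where b: "v b \<noteq> 0" using v0 by (auto simp: fun_eq_iff)
  have aX: "a \<in> X" using a su by (auto simp: supp_def)
  have bY: "b \<in> Y" using b sv by (auto simp: supp_def)
  have va: "v a = 0" using aX dis sv by (auto simp: supp_def)
  have ub: "u b = 0" using bY dis su by (auto simp: supp_def)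
  have "a \<in> supp (u + v)" "b \<in> supp (u + v)" using a b va ub by (auto simp: supp_def)
  thus False using s aX bY two_cases[OF X Y XY] AB by auto
qed

definition cr :: "(nat \<Rightarrow> 'f) \<Rightarrow> nat set \<Rightarrow> nat set \<Rightarrow> bool" where
  "cr x S T \<longleftrightarrow> x \<in> C1 \<and> x \<noteq> 0 \<and> supp x \<subseteq> S \<and> supp (t x) \<subseteq> T"

lemma combine:
  assumes c: "cr x S T" "cr x' S' T'" and in4: "S \<in> {A, B}" "S' \<in> {A, B}" "T \<in> {A, B}" "T' \<in> {A, B}"
    and d: "(S = S' \<and> T \<noteq> T') \<or> (S \<noteq> S' \<and> T = T')"
  shows False
proof -
  have x: "x \<in> C1" "x \<noteq> 0" "supp x \<subseteq> S" "supp (t x) \<subseteq> T" using c(1) cr_def by auto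
  have x': "x' \<in> C1" "x' \<noteq> 0" "supp x' \<subseteq> S'" "supp (t x') \<subseteq> T'" using c(2) cr_def by auto
  have tx0: "t x \<noteq> 0" "t x' \<noteq> 0" using tzero x x' by auto
  have s: "x + x' \<in> C1" using C1add x(1) x'(1) .
  have ts: "t (x + x') = t x + t x'" using tadd x(1) x'(1) .
  show False using d
  proof
    assume h: "S = S' \<and> T \<noteq> T'"
    have "supp (x + x') \<subseteq> S" using supp_add_sub[of x x'] x(3) x'(3) h by auto
    hence "wtF {A, B} (x + x') \<le> 1" using le1[OF C1v[OF s]] in4(1) by auto
    hence "wtF {A, B} (t x + t x') \<le> 1" using twt[OF s] ts by simp
    moreover have "\<not> wtF {A, B} (t x + t x') \<le> 1"
      by (rule mixed[OF tv[OF x(1)] tv[OF x'(1)] in4(3,4)]) (use h x x' tx0 in auto)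
    ultimately show False by simp
  next
    assume h: "S \<noteq> S' \<and> T = T'"
    have "supp (t x + t x') \<subseteq> T" using supp_add_sub[of "t x" "t x'"] x(4) x'(4) h by auto
    hence "wtF {A, B} (t x + t x') \<le> 1" using le1[OF vecs_add[OF tv[OF x(1)] tv[OF x'(1)]]] in4(3) by auto
    hence "wtF {A, B} (x + x') \<le> 1" using twt[OF s] ts by simp
    moreover have "\<not> wtF {A, B} (x + x') \<le> 1"
      by (rule mixed[OF C1v[OF x(1)] C1v[OF x'(1)] in4(1,2)]) (use h x x' in auto)
    ultimately show False by simp
  qed
qed

lemma crI:
  assumes x: "x \<in> C1" "supp x \<subseteq> S" "S \<in> {A, B}" and n: "\<not> supp (t x) \<subseteq> T" and T: "T \<in> {A, B}"
  shows "\<exists>T'. T' \<in> {A, B} \<and> T' \<noteq> T \<and> cr x S T'"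
proof -
  have "wtF {A, B} x \<le> 1" using le1[OF C1v[OF x(1)]] x(2,3) by auto
  hence "wtF {A, B} (t x) \<le> 1" using twt[OF x(1)] by simp
  hence s: "supp (t x) \<subseteq> A \<or> supp (t x) \<subseteq> B" using le1[OF tv[OF x(1)]] by simp
  have x0: "x \<noteq> 0" using n t0 by auto
  show ?thesis
  proof (cases "supp (t x) \<subseteq> A")
    case True
    thus ?thesis using n x x0 T unfolding cr_def by (intro exI[of _ A]) auto
  next
    case False
    hence "supp (t x) \<subseteq> B" using s by simp
    thus ?thesis using n x x0 T unfolding cr_def by (intro exI[of _ B]) auto
  qed
qed

definition good :: "nat set \<Rightarrow> nat set \<Rightarrow> bool" where
  "good X1 Y1 \<longleftrightarrow> (\<forall>x\<in>C1. supp x \<subseteq> A \<longrightarrow> supp (t x) \<subseteq> X1) \<and> (\<forall>x\<in>C1. supp x \<subseteq> B \<longrightarrow> supp (t x) \<subseteq> Y1)"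

lemma AneB: "A \<noteq> B" using AB Ane by auto

lemma side: "good A B \<or> good B A"
proof (rule ccontr)
  assume "\<not> ?thesis"
  hence n1: "\<not> good A B" and n2: "\<not> good B A" by auto
  have AB4: "A \<in> {A, B}" "B \<in> {A, B}" by auto
  obtain x S T where c1: "cr x S T" "S \<in> {A, B}" "T \<in> {A, B}" "S \<noteq> T"
  proof -
    from n1 consider (a) x where "x \<in> C1" "supp x \<subseteq> A" "\<not> supp (t x) \<subseteq> A"
      | (b) x where "x \<in> C1" "supp x \<subseteq> B" "\<not> supp (t x) \<subseteq> B"
      unfolding good_def by auto
    thus ?thesis
    proof cases
      case a
      then obtain T' where "T' \<in> {A, B}" "T' \<noteq> A" "cr x A T'" using crI[OF a(1,2) AB4(1) a(3) AB4(1)] by auto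
      thus ?thesis using that[of x A T'] AB4 by auto
    next
      case b
      then obtain T' where "T' \<in> {A, B}" "T' \<noteq> B" "cr x B T'" using crI[OF b(1,2) AB4(2) b(3) AB4(2)] by auto
      thus ?thesis using that[of x B T'] AB4 by auto
    qed
  qed
  obtain x' S' T' where c2: "cr x' S' T'" "S' \<in> {A, B}" "T' \<in> {A, B}" "S' = T'"
  proof -
    from n2 consider (a) x where "x \<in> C1" "supp x \<subseteq> A" "\<not> supp (t x) \<subseteq> B"
      | (b) x where "x \<in> C1" "supp x \<subseteq> B" "\<not> supp (t x) \<subseteq> A"
      unfolding good_def by auto
    thus ?thesis
    proof cases
      case a
      then obtain T' where "T' \<in> {A, B}" "T' \<noteq> B" "cr x A T'" using crI[OF a(1,2) AB4(1) a(3) AB4(2)] by auto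
      hence "T' = A" by auto
      thus ?thesis using that[of x A A] \<open>cr x A T'\<close> AB4 by auto
    next
      case b
      then obtain T' where "T' \<in> {A, B}" "T' \<noteq> A" "cr x B T'" using crI[OF b(1,2) AB4(2) b(3) AB4(1)] by auto
      hence "T' = B" by auto
      thus ?thesis using that[of x B B] \<open>cr x B T'\<close> AB4 by auto
    qed
  qed
  have "(S = S' \<and> T \<noteq> T') \<or> (S \<noteq> S' \<and> T = T')"
    using c1(2,3,4) c2(2,3,4) by auto
  thus False using combine[OF c1(1) c2(1) c1(2) c2(2) c1(3) c2(3)] by simp
qed

end


context mepset
begin

lemma gbuild:
  assumes XY: "(X = A \<and> Y = B) \<or> (X = B \<and> Y = A)" and XY1: "(X1 = A \<and> Y1 = B) \<or> (X1 = B \<and> Y1 = A)"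
    and gX: "\<forall>x\<in>C1. supp x \<subseteq> X \<longrightarrow> supp (t x) \<subseteq> X1"
    and gY: "\<forall>x\<in>C1. supp x \<subseteq> Y \<longrightarrow> supp (t x) \<subseteq> Y1"
    and cX: "card X = card X1"
  shows "\<exists>h. Vector_Spaces.linear smult_vec smult_vec h \<and> (\<forall>x\<in>C1. h (pr X x) = pr X1 (t x)) \<and>
      h ` VV X \<subseteq> VV X1 \<and> (\<forall>v\<in>VV X. h v = 0 \<longrightarrow> v = 0)"
proof -
  interpret vs: vector_space "smult_vec :: 'f \<Rightarrow> (nat \<Rightarrow> 'f) \<Rightarrow> (nat \<Rightarrow> 'f)" by (rule vs_smult)
  have dXY: "X \<inter> Y = {}" "X1 \<inter> Y1 = {}" using XY XY1 AB by auto
  have cXY: "X \<union> Y = {1..n}" "X1 \<union> Y1 = {1..n}" using XY XY1 cov by auto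
  have fX: "finite X" "finite X1" using cXY by (metis finite_Un finite_atLeastAtMost)+
  have XinF: "X \<in> {A, B}" "Y \<in> {A, B}" "X1 \<in> {A, B}" "Y1 \<in> {A, B}" using XY XY1 by auto
  define P where "P = pr X ` C1"
  define g where "g = (\<lambda>p. pr X1 (t (SOME x. x \<in> C1 \<and> pr X x = p)))"
  have key: "g (pr X x) = pr X1 (t x)" if x: "x \<in> C1" for x
  proof -
    have "\<exists>x'. x' \<in> C1 \<and> pr X x' = pr X x" using x by blast
    then obtain x0 where x0: "x0 = (SOME x'. x' \<in> C1 \<and> pr X x' = pr X x)" "x0 \<in> C1" "pr X x0 = pr X x"
      using someI_ex by (metis (mono_tags, lifting))
    have gx: "g (pr X x) = pr X1 (t x0)" unfolding g_def x0(1) ..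
    have d: "x - x0 \<in> C1" using C1diff[OF x x0(2)] .
    have "pr X (x - x0) = 0" using x0(3) by (simp add: pr_diff)
    hence "supp (x - x0) \<inter> X = {}" using pr_zero_iff by blast
    moreover have "supp (x - x0) \<subseteq> X \<union> Y" using C1v[OF d] cXY vecs_supp by metis
    ultimately have "supp (x - x0) \<subseteq> Y" by auto
    hence "supp (t (x - x0)) \<subseteq> Y1" using gY d by blast
    hence "pr X1 (t (x - x0)) = 0" using pr_other dXY(2) by blast
    hence "pr X1 (t x) = pr X1 (t x0)" using tdiff[OF x x0(2)] by (simp add: pr_diff)
    thus ?thesis using gx by simp
  qed
  have PX: "P \<subseteq> VV X" unfolding P_def using pr_VV by auto
  have Ps: "vs.subspace P"
  proof (rule vs.subspaceI)
    show "0 \<in> P" unfolding P_def using C10 by (intro image_eqI[of _ _ 0]) (auto simp: pr_def fun_eq_iff)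
    show "x + y \<in> P" if xyP: "x \<in> P" "y \<in> P" for x y
    proof -
      obtain a b where "a \<in> C1" "b \<in> C1" "x = pr X a" "y = pr X b" using xyP P_def by auto
      thus ?thesis unfolding P_def using C1add by (intro image_eqI[of _ _ "a + b"]) (auto simp: pr_add)
    qed
    show "smult_vec c x \<in> P" if xP: "x \<in> P" for c x
    proof -
      obtain a where "a \<in> C1" "x = pr X a" using xP P_def by auto
      thus ?thesis unfolding P_def using C1sm by (intro image_eqI[of _ _ "smult_vec c a"]) (auto simp: pr_smult)
    qed
  qed
  have gl: "linear_on P g"
    unfolding linear_on_def
  proof (intro conjI ballI allI)
    fix p q assume "p \<in> P" "q \<in> P"
    then obtain a b where ab: "a \<in> C1" "b \<in> C1" "p = pr X a" "q = pr X b" using P_def by auto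
    have "p + q = pr X (a + b)" using ab by (simp add: pr_add)
    hence "g (p + q) = pr X1 (t (a + b))" using key C1add[OF ab(1,2)] by simp
    also have "\<dots> = g p + g q" using tadd[OF ab(1,2)] key ab by (simp add: pr_add)
    finally show "g (p + q) = g p + g q" .
  next
    fix c p assume "p \<in> P"
    then obtain a where a: "a \<in> C1" "p = pr X a" using P_def by auto
    have "smult_vec c p = pr X (smult_vec c a)" using a by (simp add: pr_smult)
    hence "g (smult_vec c p) = pr X1 (t (smult_vec c a))" using key C1sm[OF a(1)] by simp
    also have "\<dots> = smult_vec c (g p)" using tsm[OF a(1)] key a by (simp add: pr_smult)
    finally show "g (smult_vec c p) = smult_vec c (g p)" .
  qed
  have gP: "g ` P \<subseteq> VV X1" unfolding g_def using pr_VV by auto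
  have ker: "\<forall>p\<in>P. g p = 0 \<longrightarrow> p = 0"
  proof (intro ballI impI)
    fix p assume p: "p \<in> P" "g p = 0"
    then obtain x where x: "x \<in> C1" "p = pr X x" using P_def by auto
    have "pr X1 (t x) = 0" using key[OF x(1)] p(2) x(2) by simp
    hence "supp (t x) \<inter> X1 = {}" using pr_zero_iff by blast
    moreover have "supp (t x) \<subseteq> X1 \<union> Y1" using tv[OF x(1)] cXY vecs_supp by metis
    ultimately have tY: "supp (t x) \<subseteq> Y1" by auto
    hence "wtF {A, B} (t x) \<le> 1" using le1[OF tv[OF x(1)]] XinF by auto
    hence "wtF {A, B} x \<le> 1" using twt[OF x(1)] by simp
    hence "supp x \<subseteq> X \<or> supp x \<subseteq> Y" using le1[OF C1v[OF x(1)]] XY by auto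
    thus "p = 0"
    proof
      assume "supp x \<subseteq> X"
      hence "supp (t x) \<subseteq> X1" using gX x(1) by blast
      hence "supp (t x) = {}" using tY dXY(2) by auto
      hence "t x = 0" using supp_empty_iff by blast
      hence "x = 0" using tzero x(1) by blast
      thus "p = 0" using x(2) by (simp add: pr_def fun_eq_iff)
    next
      assume "supp x \<subseteq> Y"
      thus "p = 0" using x(2) pr_other dXY(1) by blast
    qed
  qed
  obtain h where h: "Vector_Spaces.linear smult_vec smult_vec h" "\<forall>p\<in>P. h p = g p"
    "h ` VV X \<subseteq> VV X1" "\<forall>v\<in>VV X. h v = 0 \<longrightarrow> v = 0"
    using ext_inj[OF fX(1,2) cX PX Ps gl gP ker] by blast
  have "\<forall>x\<in>C1. h (pr X x) = pr X1 (t x)"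
    using h(2) key unfolding P_def by auto
  thus ?thesis using h by blast
qed

end


lemma pr_sum_id: "supp w \<subseteq> X \<union> Y \<Longrightarrow> X \<inter> Y = {} \<Longrightarrow> pr X w + pr Y w = (w :: nat \<Rightarrow> 'f::monoid_add)"
  by (auto simp: pr_def fun_eq_iff supp_def)

context mepset
begin

theorem extension:
  assumes cAB: "card A = card B"
  shows "\<exists>T. linear_isometry n {A, B} T \<and> (\<forall>x\<in>C1. T x = t x)"
proof -
  interpret vp: vector_space_pair "smult_vec :: 'f \<Rightarrow> (nat \<Rightarrow> 'f) \<Rightarrow> (nat \<Rightarrow> 'f)" smult_vec by (rule vsp_smult)
  obtain A1 B1 where g: "good A1 B1" and AB1: "(A1 = A \<and> B1 = B) \<or> (A1 = B \<and> B1 = A)"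
    using side by blast
  have gA: "\<forall>x\<in>C1. supp x \<subseteq> A \<longrightarrow> supp (t x) \<subseteq> A1" and gB: "\<forall>x\<in>C1. supp x \<subseteq> B \<longrightarrow> supp (t x) \<subseteq> B1"
    using g unfolding good_def by auto
  have c1: "card A = card A1" "card B = card B1" using AB1 cAB by auto
  obtain h1 where h1: "Vector_Spaces.linear smult_vec smult_vec h1" "\<forall>x\<in>C1. h1 (pr A x) = pr A1 (t x)"
      "h1 ` VV A \<subseteq> VV A1" "\<forall>v\<in>VV A. h1 v = 0 \<longrightarrow> v = 0"
    using gbuild[of A B A1 B1] AB1 gA gB c1 by auto
  have AB1': "(B1 = A \<and> A1 = B) \<or> (B1 = B \<and> A1 = A)" using AB1 by auto
  obtain h2 where h2: "Vector_Spaces.linear smult_vec smult_vec h2" "\<forall>x\<in>C1. h2 (pr B x) = pr B1 (t x)"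
      "h2 ` VV B \<subseteq> VV B1" "\<forall>v\<in>VV B. h2 v = 0 \<longrightarrow> v = 0"
    using gbuild[of B A B1 A1] AB1' gA gB c1 by auto
  have d1: "A1 \<inter> B1 = {}" "A1 \<union> B1 = {1..n}" using AB1 AB cov by auto
  have F1: "{A1, B1} = {A, B}" using AB1 by auto
  define T where "T = (\<lambda>v. h1 (pr A v) + h2 (pr B v))"
  have Tadd: "T (u + v) = T u + T v" for u v
    unfolding T_def pr_add vp.linear_add[OF h1(1)] vp.linear_add[OF h2(1)] by (simp add: algebra_simps)
  have Tsm: "T (smult_vec c v) = smult_vec c (T v)" for c v
    unfolding T_def pr_smult vp.linear_scale[OF h1(1)] vp.linear_scale[OF h2(1)]
    by (simp add: fun_eq_iff distrib_left)
  have VA1: "VV A1 \<subseteq> vecs n" "VV B1 \<subseteq> vecs n"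
  proof -
    have "A1 \<subseteq> {1..n}" "B1 \<subseteq> {1..n}" using d1(2) by auto
    thus "VV A1 \<subseteq> vecs n" "VV B1 \<subseteq> vecs n" unfolding VV_def using vecs_supp by blast+
  qed
  have h1in: "h1 (pr A v) \<in> VV A1" for v using h1(3) pr_VV by blast
  have h2in: "h2 (pr B v) \<in> VV B1" for v using h2(3) pr_VV by blast
  have Tv: "T v \<in> vecs n" for v unfolding T_def using VA1 h1in h2in vecs_add by blast
  have prA1: "pr A1 (T v) = h1 (pr A v)" for v
  proof -
    have "pr A1 (h1 (pr A v)) = h1 (pr A v)" using h1in[of v] pr_id unfolding VV_def by blast
    moreover have "pr A1 (h2 (pr B v)) = 0" using h2in[of v] pr_other d1(1) unfolding VV_def by blast
    ultimately show ?thesis unfolding T_def pr_add by simp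
  qed
  have prB1: "pr B1 (T v) = h2 (pr B v)" for v
  proof -
    have "pr B1 (h2 (pr B v)) = h2 (pr B v)" using h2in[of v] pr_id unfolding VV_def by blast
    moreover have "pr B1 (h1 (pr A v)) = 0" using h1in[of v] pr_other d1(1) unfolding VV_def by blast
    ultimately show ?thesis unfolding T_def pr_add by simp
  qed
  have z1: "h1 (pr A v) = 0 \<longleftrightarrow> pr A v = 0" for v
    using h1(4) pr_VV vp.linear_0[OF h1(1)] by metis
  have z2: "h2 (pr B v) = 0 \<longleftrightarrow> pr B v = 0" for v
    using h2(4) pr_VV vp.linear_0[OF h2(1)] by metis
  have Twt: "wtF {A, B} (T z) = wtF {A, B} z" if z: "z \<in> vecs n" for z
  proof -
    have "wtF {A, B} (T z) = wtF {A1, B1} (T z)" using F1 by simp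
    also have "\<dots> = (if pr A1 (T z) = 0 then 0 else 1) + (if pr B1 (T z) = 0 then 0 else 1)"
      by (rule wt_formula[OF d1 Tv])
    also have "\<dots> = (if pr A z = 0 then 0 else 1) + (if pr B z = 0 then 0 else 1)"
      using prA1 prB1 z1 z2 by simp
    also have "\<dots> = wtF {A, B} z" using wt_formula[OF AB cov z] by simp
    finally show ?thesis .
  qed
  have Tdiff: "T x - T y = T (x - y)" for x y :: "nat \<Rightarrow> 'f"
  proof -
    have "T x = T (x - y) + T y" using Tadd[of "x - y" y] by simp
    thus ?thesis by simp
  qed
  have iso: "linear_isometry n {A, B} T"
    unfolding linear_isometry_def linear_on_def
  proof (intro conjI ballI allI)
    fix x y :: "nat \<Rightarrow> 'f" assume "x \<in> vecs n" "y \<in> vecs n"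
    show "T (x + y) = T x + T y" by (rule Tadd)
  next
    fix c and x :: "nat \<Rightarrow> 'f" assume "x \<in> vecs n"
    show "T (smult_vec c x) = smult_vec c (T x)" by (rule Tsm)
  next
    show "T ` vecs n \<subseteq> vecs n" using Tv by auto
  next
    fix x y :: "nat \<Rightarrow> 'f" assume xy: "x \<in> vecs n" "y \<in> vecs n"
    show "dF {A, B} (T x) (T y) = dF {A, B} x y"
      unfolding dF_def Tdiff using Twt[OF vecs_diff[OF xy]] .
  qed
  have ext: "T x = t x" if x: "x \<in> C1" for x
  proof -
    have "T x = pr A1 (t x) + pr B1 (t x)" unfolding T_def using h1(2) h2(2) x by simp
    also have "\<dots> = t x" using pr_sum_id[OF _ d1(1)] tv[OF x] d1(2) vecs_supp by metis
    finally show ?thesis .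
  qed
  show ?thesis using iso ext by blast
qed

end


lemma backward:
  assumes n1: "n \<ge> 1" and covg: "is_covering n F" and c2: "card (components F) = 2"
    and kp: "k_partition n F k"
  shows "MEP TYPE('f::{finite,field}) n F"
proof -
  have fin: "finite F" using covering_finite[OF covg] .
  have cov: "\<Union>F = {1..n}" using covg unfolding is_covering_def by simp
  have ne: "{} \<notin> F" using kp unfolding k_partition_def by auto
  have pd: "\<forall>A\<in>F. \<forall>B\<in>F. A \<noteq> B \<longrightarrow> A \<inter> B = {}" using kp unfolding k_partition_def by auto
  obtain A B where AB: "F = {A, B}" "A \<noteq> B" "A \<inter> B = {}" using disjoint_two[OF fin ne pd c2] by blast
  have cAB: "card A = card B" using kp AB(1) unfolding k_partition_def by auto
  have Ane: "A \<noteq> {}" "B \<noteq> {}" using ne AB(1) by auto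
  have covAB: "A \<union> B = {1..n}" using cov AB(1) by auto
  show ?thesis unfolding MEP_def
  proof (intro allI impI, elim conjE)
    fix C1 C2 :: "(nat \<Rightarrow> 'f) set" and t
    assume h: "linear_code n C1" "linear_code n C2" "local_equiv F C1 C2 t"
    interpret m: mepset n A B C1 C2 t
      by unfold_locales (use AB(3) covAB Ane h AB(1) in auto)
    show "\<exists>T. linear_isometry n F T \<and> (\<forall>x\<in>C1. T x = t x)"
      using m.extension[OF cAB] AB(1) by simp
  qed
qed

theorem proposition9:
  fixes n :: nat and F :: "nat set set"
  assumes "n \<ge> 1"
    and "is_covering n F"
    and "no_redundant F"
    and "card (components F) = 2"
  shows "MEP TYPE('f::{finite,field}) n F \<longleftrightarrow> (\<exists>k. k_partition n F k)"
proof
  assume "MEP TYPE('f::{finite,field}) n F"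
  thus "\<exists>k. k_partition n F k" using forward[OF assms] by blast
next
  assume "\<exists>k. k_partition n F k"
  then obtain k where "k_partition n F k" by blast
  thus "MEP TYPE('f::{finite,field}) n F" using backward[OF assms(1,2,4)] by blast
qed


end
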